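(* Let $A,M\in\mathbb{C}^{n\times n}$ be Hermitian with $M$ positive definite, and let the eigenvalues of the pair $(A,M)$ be $\lambda_1<\lambda_2\le\cdots\le\lambda_n$. Put $A_{\lambda_1}=A-\lambda_1 M$. Let $\sigma<\lambda_1$, $A_\sigma=A-\sigma M$, let $T\in\mathbb{C}^{n\times n}$ be Hermitian positive definite and $\kappa=\operatorname{cond}_2(T^{1/2}A_\sigma T^{1/2})$ (the ratio of the largest to the smallest eigenvalue of $T^{1/2}A_\sigma T^{1/2}$). Let $x^{(0)}\in\mathbb{C}^n$ be neither an eigenvector of $(A,M)$ associated with $\lambda_1$ nor $M$-orthogonal to the eigenspace associated with $\lambda_1$, and let $x^{(0)},x^{(1)},\ldots$ be the iterates of the following heuristic preconditioned CG iteration (for as long as it is defined): set $r^{(0)}=-A_{\lambda_1}x^{(0)}$, $\gamma^{(0)}=(Tr^{(0)})^*r^{(0)}$, $p^{(0)}=Tr^{(0)}$, and for $i=0,1,\ldots$: $w=A_{\lambda_1}p^{(i)}$, $\delta=\gamma^{(i)}/(w^*p^{(i)})$, $x^{(i+1)}=x^{(i)}+\delta p^{(i)}$, $r^{(i+1)}=r^{(i)}-\delta w$, $\gamma^{(i+1)}=(Tr^{(i+1)})^*r^{(i+1)}$, $p^{(i+1)}=Tr^{(i+1)}+(\gamma^{(i+1)}/\gamma^{(i)})p^{(i)}$. Let $\lambda^{(i)}=\frac{x^{(i)*}Ax^{(i)}}{x^{(i)*}Mx^{(i)}}$. Then for $i=0,1,\ldots$, $$\lambda^{(i)}-\lambda_1\le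 \big(\mathcal{C}_i(\varphi)\big)^{-2}\frac{\|x^{(0)}\|_M^2}{\|x^{(i)}\|_M^2}(\lambda^{(0)}-\lambda_1),\qquad \varphi=\frac{\eta+1}{\eta-1},\quad \eta=\kappa\,\frac{(\lambda_n-\lambda_1)(\lambda_2-\sigma)}{(\lambda_2-\lambda_1)(\lambda_n-\sigma)}.$$
   Context: $\mathcal{C}_i$ is the Chebyshev polynomial of the first kind of degree $i$. $\|y\|_M=(y^*My)^{1/2}$. $T^{1/2}$ is the Hermitian positive definite square root of $T$. *)

theory Defs
  imports Complex_Main "Jordan_Normal_Form.Schur_Decomposition" "Jordan_Normal_Form.Char_Poly"
begin

definition ip :: "complex vec \<Rightarrow> complex vec \<Rightarrow> complex" where
  "ip u v = conjugate u \<bullet> v"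

definition hermitian :: "nat \<Rightarrow> complex mat \<Rightarrow> bool" where
  "hermitian n A \<longleftrightarrow> A \<in> carrier_mat n n \<and> mat_adjoint A = A"

definition pos_def :: "nat \<Rightarrow> complex mat \<Rightarrow> bool" where
  "pos_def n A \<longleftrightarrow> hermitian n A \<and>
     (\<forall>x \<in> carrier_vec n. x \<noteq> 0\<^sub>v n \<longrightarrow> Re (ip x (A *\<^sub>v x)) > 0)"

definition msqrt :: "nat \<Rightarrow> complex mat \<Rightarrow> complex mat" where
  "msqrt n T = (THE S. pos_def n S \<and> S * S = T)"

(* ratio of largest to smallest eigenvalue (eigenvalues of a Hermitian matrix are real) *)
definition cond2 :: "complex mat \<Rightarrow> real" where
  "cond2 B = Max (Re ` {k. eigenvalue B k}) / Min (Re ` {k. eigenvalue B k})"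

fun cheb :: "nat \<Rightarrow> real \<Rightarrow> real" where
  "cheb 0 x = 1"
| "cheb (Suc 0) x = x"
| "cheb (Suc (Suc k)) x = 2 * x * cheb (Suc k) x - cheb k x"

definition mnorm :: "complex mat \<Rightarrow> complex vec \<Rightarrow> real" where
  "mnorm M y = sqrt (Re (ip y (M *\<^sub>v y)))"

definition rq :: "complex mat \<Rightarrow> complex mat \<Rightarrow> complex vec \<Rightarrow> real" where
  "rq A M x = Re (ip x (A *\<^sub>v x)) / Re (ip x (M *\<^sub>v x))"

(* Heuristic PCG iteration for A_{lambda_1} = Al, preconditioner T;
   state (x^(i), r^(i), gamma^(i), p^(i)) *)
definition pcg_step :: "complex mat \<Rightarrow> complex mat \<Rightarrow>
    complex vec \<times> complex vec \<times> complex \<times> complex vec \<Rightarrow>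
    complex vec \<times> complex vec \<times> complex \<times> complex vec" where
  "pcg_step Al T st = (case st of (x, r, g, p) \<Rightarrow>
     let w = Al *\<^sub>v p;
         \<delta> = g / ip w p;
         x' = x + \<delta> \<cdot>\<^sub>v p;
         r' = r - \<delta> \<cdot>\<^sub>v w;
         g' = ip (T *\<^sub>v r') r';
         p' = T *\<^sub>v r' + (g' / g) \<cdot>\<^sub>v p
     in (x', r', g', p'))"

primrec pcg :: "complex mat \<Rightarrow> complex mat \<Rightarrow> complex vec \<Rightarrow> nat \<Rightarrow>
    complex vec \<times> complex vec \<times> complex \<times> complex vec" where
  "pcg Al T x0 0 = (let r = - (Al *\<^sub>v x0) in (x0, r, ip (T *\<^sub>v r) r, T *\<^sub>v r))"
| "pcg Al T x0 (Suc i) = pcg_step Al T (pcg Al T x0 i)"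

definition pcg_x where "pcg_x Al T x0 i = fst (pcg Al T x0 i)"
definition pcg_gamma where "pcg_gamma Al T x0 i = fst (snd (snd (pcg Al T x0 i)))"
definition pcg_p where "pcg_p Al T x0 i = snd (snd (snd (pcg Al T x0 i)))"

end

theory Submission
  imports Defs
begin


lemma ip_eq0: "dim_vec u = dim_vec v \<Longrightarrow> ip u v = (\<Sum>i<dim_vec v. cnj (u$i) * v$i)"
  unfolding ip_def scalar_prod_def by (auto intro!: sum.cong simp: atLeast0LessThan)

lemma ip_eq: "u \<in> carrier_vec n \<Longrightarrow> v \<in> carrier_vec n \<Longrightarrow> ip u v = (\<Sum>i<n. cnj (u$i) * v$i)"
  using ip_eq0[of u v] by auto

lemma row_eq[simp]: "A \<in> carrier_mat n n \<Longrightarrow> v \<in> carrier_vec n \<Longrightarrow> i < n \<Longrightarrow>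
   row A i \<bullet> v = (\<Sum>j<n. A$$(i,j) * v$j)"
  by (auto simp: scalar_prod_def atLeast0LessThan intro!: sum.cong)

lemma mv_eq: "A \<in> carrier_mat n n \<Longrightarrow> v \<in> carrier_vec n \<Longrightarrow> i < n \<Longrightarrow>
   (A *\<^sub>v v) $ i = (\<Sum>j<n. A$$(i,j) * v$j)"
  by (auto simp: scalar_prod_def atLeast0LessThan intro!: sum.cong)

lemma herm_entry: "hermitian n A \<Longrightarrow> i < n \<Longrightarrow> j < n \<Longrightarrow> A$$(i,j) = cnj (A$$(j,i))"
proof -
  assume h: "hermitian n A" and i: "i<n" and j: "j<n"
  hence A: "A \<in> carrier_mat n n" and e: "mat_adjoint A = A" unfolding hermitian_def by auto
  have "A$$(i,j) = mat_adjoint A $$ (i,j)" using e by simp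
  also have "\<dots> = cnj (A$$(j,i))" using A i j
    unfolding mat_adjoint_def by (simp add: mat_of_rows_def)
  finally show ?thesis .
qed

lemma ip_conj: assumes "u \<in> carrier_vec n" "v \<in> carrier_vec n" shows "cnj (ip u v) = ip v u"
  unfolding ip_eq[OF assms] ip_eq[OF assms(2,1)] by (simp add: mult.commute)

lemma ip_add_right: assumes "u \<in> carrier_vec n" "v \<in> carrier_vec n" "w \<in> carrier_vec n"
  shows "ip u (v + w) = ip u v + ip u w"
  unfolding ip_eq[OF assms(1,2)] ip_eq[OF assms(1,3)] ip_eq[OF assms(1) add_carrier_vec[OF assms(2,3)]]
  using assms by (simp add: distrib_left sum.distrib)
lemma ip_add_left: assumes "u \<in> carrier_vec n" "v \<in> carrier_vec n" "w \<in> carrier_vec n"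
  shows "ip (v + w) u = ip v u + ip w u"
  unfolding ip_eq[OF assms(2,1)] ip_eq[OF assms(3,1)] ip_eq[OF add_carrier_vec[OF assms(2,3)] assms(1)]
  using assms by (simp add: distrib_right sum.distrib)
lemma ip_minus_right: assumes "u \<in> carrier_vec n" "v \<in> carrier_vec n" "w \<in> carrier_vec n"
  shows "ip u (v - w) = ip u v - ip u w"
  unfolding ip_eq[OF assms(1,2)] ip_eq[OF assms(1,3)] ip_eq[OF assms(1) minus_carrier_vec[OF assms(2,3)]]
  using assms by (simp add: right_diff_distrib sum_subtractf)
lemma ip_minus_left: assumes "u \<in> carrier_vec n" "v \<in> carrier_vec n" "w \<in> carrier_vec n"
  shows "ip (v - w) u = ip v u - ip w u"
  unfolding ip_eq[OF assms(2,1)] ip_eq[OF assms(3,1)] ip_eq[OF minus_carrier_vec[OF assms(2,3)] assms(1)]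
  using assms by (simp add: left_diff_distrib sum_subtractf)
lemma ip_smult_right: assumes "u \<in> carrier_vec n" "v \<in> carrier_vec n"
  shows "ip u (a \<cdot>\<^sub>v v) = a * ip u v"
  unfolding ip_eq[OF assms(1,2)] ip_eq[OF assms(1) smult_carrier_vec[THEN iffD2, OF assms(2)]]
  using assms by (simp add: sum_distrib_left mult.left_commute)
lemma ip_smult_left: assumes "u \<in> carrier_vec n" "v \<in> carrier_vec n"
  shows "ip (a \<cdot>\<^sub>v v) u = cnj a * ip v u"
  unfolding ip_eq[OF assms(2,1)] ip_eq[OF smult_carrier_vec[THEN iffD2, OF assms(2)] assms(1)]
  using assms by (simp add: sum_distrib_left mult.assoc)
lemma ip_zero_right: "u \<in> carrier_vec n \<Longrightarrow> ip u (0\<^sub>v n) = 0"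
  by (simp add: ip_eq[of u n "0\<^sub>v n"])
lemma ip_zero_left: "u \<in> carrier_vec n \<Longrightarrow> ip (0\<^sub>v n) u = 0"
  by (simp add: ip_eq[of "0\<^sub>v n" n u])

lemma cnj_mult_self: "cnj z * z = complex_of_real ((Re z)\<^sup>2 + (Im z)\<^sup>2)"
  by (simp add: complex_eq_iff power2_eq_square)

lemma ip_self: "u \<in> carrier_vec n \<Longrightarrow> ip u u = of_real (\<Sum>i<n. (Re (u$i))\<^sup>2 + (Im (u$i))\<^sup>2)"
proof -
  assume u: "u \<in> carrier_vec n"
  have "ip u u = (\<Sum>i<n. of_real ((Re (u$i))\<^sup>2 + (Im (u$i))\<^sup>2))"
    using u by (auto simp: ip_eq cnj_mult_self intro!: sum.cong)
  thus ?thesis by (simp only: of_real_sum)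
qed

lemma ip_self_Re: "u \<in> carrier_vec n \<Longrightarrow> Re (ip u u) \<ge> 0"
  by (simp add: ip_self sum_nonneg)

lemma ip_self_Im: "u \<in> carrier_vec n \<Longrightarrow> Im (ip u u) = 0"
  by (simp add: ip_self)

lemma ip_self_zero: assumes u: "u \<in> carrier_vec n" and z: "ip u u = 0" shows "u = 0\<^sub>v n"
proof (rule eq_vecI)
  fix i assume i: "i < dim_vec (0\<^sub>v n :: complex vec)"
  have "(\<Sum>i<n. (Re (u$i))\<^sup>2 + (Im (u$i))\<^sup>2) = 0" using z ip_self[OF u] by (metis of_real_eq_0_iff)
  hence "\<forall>i\<in>{..<n}. (Re (u$i))\<^sup>2 + (Im (u$i))\<^sup>2 = 0" by (subst sum_nonneg_eq_0_iff[symmetric]) auto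
  thus "u $ i = 0\<^sub>v n $ i" using i by (auto simp: complex_eq_iff)
qed (use u in auto)

lemma ip_self_pos: assumes "u \<in> carrier_vec n" "u \<noteq> 0\<^sub>v n" shows "Re (ip u u) > 0"
proof -
  have "Re (ip u u) \<noteq> 0" using ip_self_Im[OF assms(1)] ip_self_zero[OF assms(1)] assms(2) complex_eq_iff by force
  thus ?thesis using ip_self_Re[OF assms(1)] by linarith
qed

lemma herm_carrier: "hermitian n A \<Longrightarrow> A \<in> carrier_mat n n"
  unfolding hermitian_def by auto

lemma ip_mat_swap: assumes A: "A \<in> carrier_mat n n" and B: "B \<in> carrier_mat n n"
  and AB: "\<And>i j. i<n \<Longrightarrow> j<n \<Longrightarrow> B$$(j,i) = cnj (A$$(i,j))"
  and u: "u \<in> carrier_vec n" and v: "v \<in> carrier_vec n"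
  shows "ip u (A *\<^sub>v v) = ip (B *\<^sub>v u) v"
proof -
  have "ip u (A *\<^sub>v v) = (\<Sum>i<n. cnj (u$i) * (\<Sum>j<n. A$$(i,j) * v$j))"
    using A u v by (simp add: ip_eq[of u n "A *\<^sub>v v"] mv_eq)
  also have "\<dots> = (\<Sum>i<n. \<Sum>j<n. cnj (u$i) * A$$(i,j) * v$j)"
    by (simp add: sum_distrib_left mult.assoc)
  also have "\<dots> = (\<Sum>j<n. \<Sum>i<n. cnj (u$i) * A$$(i,j) * v$j)" by (rule sum.swap)
  also have "\<dots> = (\<Sum>j<n. \<Sum>i<n. cnj (B$$(j,i) * u$i) * v$j)"
    by (intro sum.cong refl) (simp add: AB)
  also have "\<dots> = (\<Sum>j<n. cnj (\<Sum>i<n. B$$(j,i) * u$i) * v$j)"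
    by (simp add: sum_distrib_right cnj_sum)
  also have "\<dots> = ip (B *\<^sub>v u) v"
    using B u v by (simp add: ip_eq[of "B *\<^sub>v u" n v] mv_eq)
  finally show ?thesis .
qed

lemma herm_ip: assumes h: "hermitian n A" and u: "u \<in> carrier_vec n" and v: "v \<in> carrier_vec n"
  shows "ip u (A *\<^sub>v v) = ip (A *\<^sub>v u) v"
  using herm_carrier[OF h] u v by (intro ip_mat_swap) (auto intro: herm_entry[OF h])

lemma herm_real: assumes h: "hermitian n A" and u: "u \<in> carrier_vec n"
  shows "cnj (ip u (A *\<^sub>v u)) = ip u (A *\<^sub>v u)" "Im (ip u (A *\<^sub>v u)) = 0"
proof -
  have A: "A \<in> carrier_mat n n" using h herm_carrier by auto
  show "cnj (ip u (A *\<^sub>v u)) = ip u (A *\<^sub>v u)"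
    using ip_conj[of u n "A *\<^sub>v u"] herm_ip[OF h u u] A u by auto
  thus "Im (ip u (A *\<^sub>v u)) = 0" by (simp add: complex_eq_iff)
qed

lemma ip_mat_adj: assumes A: "A \<in> carrier_mat n n" and u: "u \<in> carrier_vec n" and v: "v \<in> carrier_vec n"
  shows "ip u (A *\<^sub>v v) = ip (mat_adjoint A *\<^sub>v u) v"
proof -
  have adj: "mat_adjoint A \<in> carrier_mat n n" "\<And>i j. i<n \<Longrightarrow> j<n \<Longrightarrow> mat_adjoint A $$ (i,j) = cnj (A$$(j,i))"
    using A unfolding mat_adjoint_def by (auto simp: mat_of_rows_def)
  show ?thesis using A u v adj by (intro ip_mat_swap) auto
qed

definition vs :: "nat \<Rightarrow> (nat \<Rightarrow> complex vec) \<Rightarrow> nat set \<Rightarrow> complex vec" where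
  "vs n f K = vec n (\<lambda>i. \<Sum>k\<in>K. f k $ i)"

lemma vs_carrier[simp]: "vs n f K \<in> carrier_vec n" unfolding vs_def by auto
lemma vs_dim[simp]: "dim_vec (vs n f K) = n" unfolding vs_def by auto
lemma vs_index[simp]: "i < n \<Longrightarrow> vs n f K $ i = (\<Sum>k\<in>K. f k $ i)" unfolding vs_def by auto

lemma mat_vs: assumes A: "A \<in> carrier_mat n n" and f: "\<And>k. k \<in> K \<Longrightarrow> f k \<in> carrier_vec n"
  shows "A *\<^sub>v vs n f K = vs n (\<lambda>k. A *\<^sub>v f k) K"
proof (rule eq_vecI)
  fix i assume "i < dim_vec (vs n (\<lambda>k. A *\<^sub>v f k) K)"
  hence i: "i < n" by simp
  have "(A *\<^sub>v vs n f K) $ i = (\<Sum>j<n. A$$(i,j) * (\<Sum>k\<in>K. f k $ j))"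
    using A i by (simp add: mv_eq)
  also have "\<dots> = (\<Sum>j<n. \<Sum>k\<in>K. A$$(i,j) * f k $ j)"
    by (simp add: sum_distrib_left)
  also have "\<dots> = (\<Sum>k\<in>K. \<Sum>j<n. A$$(i,j) * f k $ j)"
    by (rule sum.swap)
  also have "\<dots> = vs n (\<lambda>k. A *\<^sub>v f k) K $ i"
    using A i f by (simp add: mv_eq)
  finally show "(A *\<^sub>v vs n f K) $ i = vs n (\<lambda>k. A *\<^sub>v f k) K $ i" .
qed (use A in auto)

lemma ip_vs_right: assumes u: "u \<in> carrier_vec n" and f: "\<And>k. k \<in> K \<Longrightarrow> f k \<in> carrier_vec n"
  shows "ip u (vs n f K) = (\<Sum>k\<in>K. ip u (f k))"
proof -
  have "ip u (vs n f K) = (\<Sum>i<n. \<Sum>k\<in>K. cnj (u$i) * f k $ i)"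
    using u by (simp add: ip_eq sum_distrib_left)
  also have "\<dots> = (\<Sum>k\<in>K. \<Sum>i<n. cnj (u$i) * f k $ i)" by (rule sum.swap)
  also have "\<dots> = (\<Sum>k\<in>K. ip u (f k))" using u f by (intro sum.cong refl) (simp add: ip_eq[of u n])
  finally show ?thesis .
qed

lemma ip_vs_left: assumes u: "u \<in> carrier_vec n" and f: "\<And>k. k \<in> K \<Longrightarrow> f k \<in> carrier_vec n"
  shows "ip (vs n f K) u = (\<Sum>k\<in>K. ip (f k) u)"
proof -
  have "ip (vs n f K) u = (\<Sum>i<n. \<Sum>k\<in>K. cnj (f k $ i) * u $ i)"
    using u by (simp add: ip_eq[of "vs n f K" n u] sum_distrib_right cnj_sum)
  also have "\<dots> = (\<Sum>k\<in>K. \<Sum>i<n. cnj (f k $ i) * u $ i)" by (rule sum.swap)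
  also have "\<dots> = (\<Sum>k\<in>K. ip (f k) u)" using u f by (intro sum.cong refl) (simp add: ip_eq[of _ n u])
  finally show ?thesis .
qed

lemma vs_cong: "(\<And>k. k \<in> K \<Longrightarrow> f k = g k) \<Longrightarrow> vs n f K = vs n g K"
  unfolding vs_def by (auto intro!: sum.cong)



lemma mm_eq: "A \<in> carrier_mat n m \<Longrightarrow> B \<in> carrier_mat m k \<Longrightarrow> i < n \<Longrightarrow> j < k \<Longrightarrow>
   (A * B) $$ (i,j) = (\<Sum>l<m. A$$(i,l) * B$$(l,j))"
  by (auto simp: scalar_prod_def atLeast0LessThan intro!: sum.cong)

lemma ip_vs_smult_right: assumes u: "u \<in> carrier_vec n" and f: "\<And>k. k \<in> K \<Longrightarrow> f k \<in> carrier_vec n"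
  shows "ip u (vs n (\<lambda>k. c k \<cdot>\<^sub>v f k) K) = (\<Sum>k\<in>K. c k * ip u (f k))"
proof -
  have "ip u (vs n (\<lambda>k. c k \<cdot>\<^sub>v f k) K) = (\<Sum>k\<in>K. ip u (c k \<cdot>\<^sub>v f k))"
    by (rule ip_vs_right) (use u f in auto)
  also have "\<dots> = (\<Sum>k\<in>K. c k * ip u (f k))" using u f by (intro sum.cong refl) (simp add: ip_smult_right)
  finally show ?thesis .
qed

lemma ip_vs_smult_left: assumes u: "u \<in> carrier_vec n" and f: "\<And>k. k \<in> K \<Longrightarrow> f k \<in> carrier_vec n"
  shows "ip (vs n (\<lambda>k. c k \<cdot>\<^sub>v f k) K) u = (\<Sum>k\<in>K. cnj (c k) * ip (f k) u)"
proof -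
  have "ip (vs n (\<lambda>k. c k \<cdot>\<^sub>v f k) K) u = (\<Sum>k\<in>K. ip (c k \<cdot>\<^sub>v f k) u)"
    by (rule ip_vs_left) (use u f in auto)
  also have "\<dots> = (\<Sum>k\<in>K. cnj (c k) * ip (f k) u)" using u f by (intro sum.cong refl) (simp add: ip_smult_left)
  finally show ?thesis .
qed

lemma smult_zero_vec0: "v \<in> carrier_vec n \<Longrightarrow> (0::complex) \<cdot>\<^sub>v v = 0\<^sub>v n"
  by (rule eq_vecI) auto

definition mtrace :: "complex mat \<Rightarrow> complex" where
  "mtrace A = (\<Sum>i<dim_row A. A$$(i,i))"

lemma mtrace_mult_comm: assumes A: "A \<in> carrier_mat n m" and B: "B \<in> carrier_mat m n"
  shows "mtrace (A * B) = mtrace (B * A)"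
proof -
  have "mtrace (A * B) = (\<Sum>i<n. (A*B)$$(i,i))" unfolding mtrace_def using A by simp
  also have "\<dots> = (\<Sum>i<n. \<Sum>l<m. A$$(i,l) * B$$(l,i))"
    by (intro sum.cong refl) (rule mm_eq[OF A B], auto)
  also have "\<dots> = (\<Sum>l<m. \<Sum>i<n. B$$(l,i) * A$$(i,l))"
    by (subst sum.swap) (simp add: mult.commute)
  also have "\<dots> = (\<Sum>i<m. (B*A)$$(i,i))"
    by (intro sum.cong refl) (rule mm_eq[OF B A, symmetric], auto)
  also have "\<dots> = mtrace (B * A)" unfolding mtrace_def using B by simp
  finally show ?thesis .
qed

lemma trace_all_eig: fixes G :: "complex mat"
  assumes G: "G \<in> carrier_mat n n" and all: "\<And>\<nu>. eigenvalue G \<nu> \<Longrightarrow> \<nu> = t"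
  shows "mtrace G = of_nat n * t"
proof -
  obtain as where cp: "char_poly G = (\<Prod>a\<leftarrow>as. [:- a, 1:])" and len: "length as = n"
    using char_poly_factorized[OF G] by blast
  obtain B P Q where sd: "schur_decomposition G as = (B,P,Q)" by (cases "schur_decomposition G as") auto
  from schur_decomposition[OF G cp sd]
  have sim: "similar_mat_wit G B P Q" and dB: "diag_mat B = as" by auto
  have dr: "dim_row G = n" using G by auto
  from sim have C: "B \<in> carrier_mat n n" "P \<in> carrier_mat n n" "Q \<in> carrier_mat n n"
    and QP: "Q * P = 1\<^sub>m n" and GPBQ: "G = P * B * Q"
    unfolding similar_mat_wit_def Let_def dr by auto
  have "mtrace G = mtrace (P * (B * Q))" using GPBQ C by (simp add: assoc_mult_mat[of P n n B n Q n])
  also have "\<dots> = mtrace ((B * Q) * P)" using C by (intro mtrace_mult_comm[of _ n n]) auto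
  also have "(B * Q) * P = B * (Q * P)" using C by (simp add: assoc_mult_mat[of B n n Q n P n])
  also have "\<dots> = B" using C QP by simp
  finally have trG: "mtrace G = mtrace B" .
  have "mtrace B = (\<Sum>i<n. as ! i)"
    unfolding mtrace_def using C dB[symmetric] by (auto simp: diag_mat_def intro!: sum.cong)
  also have "\<dots> = (\<Sum>i<n. t)"
  proof (intro sum.cong refl)
    fix i assume "i \<in> {..<n}"
    hence mem: "as ! i \<in> set as" using len by auto
    have "poly (char_poly G) (as ! i) = 0"
      unfolding cp poly_prod_list prod_list_zero_iff using mem by force
    hence "eigenvalue G (as ! i)" using eigenvalue_root_char_poly[OF G] by auto
    thus "as ! i = t" by (rule all)
  qed
  finally show ?thesis using trG by simp
qed

lemma ev_step: assumes h: "hermitian n H" and k: "k < n"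
  and u: "\<And>l. l < k \<Longrightarrow> u l \<in> carrier_vec n"
  and eu: "\<And>l. l < k \<Longrightarrow> H *\<^sub>v u l = of_real (\<mu> l) \<cdot>\<^sub>v u l"
  and on: "\<And>j l. j < k \<Longrightarrow> l < k \<Longrightarrow> ip (u j) (u l) = (if j = l then 1 else 0)"
  shows "\<exists>w \<nu>. w \<in> carrier_vec n \<and> w \<noteq> 0\<^sub>v n \<and> H *\<^sub>v w = \<nu> \<cdot>\<^sub>v w \<and> (\<forall>l<k. ip (u l) w = 0)"
proof (rule ccontr)
  assume nw: "\<not> ?thesis"
  have H: "H \<in> carrier_mat n n" using h herm_carrier by auto
  define G where "G t = mat n n (\<lambda>(i,j). H$$(i,j) + (\<Sum>l<k. (t - of_real (\<mu> l)) * (u l $ i * cnj (u l $ j))))" for t :: complex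
  have ud: "\<And>l. l < k \<Longrightarrow> dim_vec (u l) = n" using u by auto
  have Gc: "G t \<in> carrier_mat n n" for t unfolding G_def by auto
  have Gmult: "G t *\<^sub>v x = H *\<^sub>v x + vs n (\<lambda>l. ((t - of_real (\<mu> l)) * ip (u l) x) \<cdot>\<^sub>v u l) {..<k}"
    if x: "x \<in> carrier_vec n" for t x
  proof (rule eq_vecI)
    fix i assume "i < dim_vec (H *\<^sub>v x + vs n (\<lambda>l. ((t - of_real (\<mu> l)) * ip (u l) x) \<cdot>\<^sub>v u l) {..<k})"
    hence i: "i < n" using H by simp
    have "(G t *\<^sub>v x) $ i = (\<Sum>j<n. (H$$(i,j) + (\<Sum>l<k. (t - of_real (\<mu> l)) * (u l $ i * cnj (u l $ j)))) * x $ j)"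
      using i x Gc[of t] by (subst mv_eq[OF Gc]) (auto simp: G_def)
    also have "\<dots> = (\<Sum>j<n. H$$(i,j) * x$j) + (\<Sum>j<n. \<Sum>l<k. (t - of_real (\<mu> l)) * u l $ i * (cnj (u l $ j) * x $ j))"
      by (simp add: distrib_right sum.distrib sum_distrib_right mult.assoc)
    also have "(\<Sum>j<n. \<Sum>l<k. (t - of_real (\<mu> l)) * u l $ i * (cnj (u l $ j) * x $ j))
        = (\<Sum>l<k. \<Sum>j<n. (t - of_real (\<mu> l)) * u l $ i * (cnj (u l $ j) * x $ j))" by (rule sum.swap)
    also have "\<dots> = (\<Sum>l<k. ((t - of_real (\<mu> l)) * ip (u l) x) * u l $ i)"
      using u x by (intro sum.cong refl) (simp add: ip_eq[of _ n x] sum_distrib_left mult.commute mult.left_commute)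
    finally show "(G t *\<^sub>v x) $ i = (H *\<^sub>v x + vs n (\<lambda>l. ((t - of_real (\<mu> l)) * ip (u l) x) \<cdot>\<^sub>v u l) {..<k}) $ i"
      using i H x u by (auto simp: mv_eq ud intro!: sum.cong)
  qed (use Gc H in auto)
  have delta: "(\<Sum>l<k. f l * ip (u m) (u l)) = f m" if m: "m < k" for f :: "nat \<Rightarrow> complex" and m
  proof -
    have "(\<Sum>l<k. f l * ip (u m) (u l)) = (\<Sum>l<k. if l = m then f l else 0)"
      using m on by (intro sum.cong refl) auto
    thus ?thesis using m by simp
  qed
  have allt: "\<nu> = t" if ev: "eigenvalue (G t) \<nu>" for t \<nu>
  proof (rule ccontr)
    assume ne: "\<nu> \<noteq> t"
    obtain v where v: "v \<in> carrier_vec n" "v \<noteq> 0\<^sub>v n" and Gv: "G t *\<^sub>v v = \<nu> \<cdot>\<^sub>v v"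
      using ev Gc[of t] unfolding eigenvalue_def eigenvector_def by auto
    have c0: "ip (u m) v = 0" if m: "m < k" for m
    proof -
      have "ip (u m) (G t *\<^sub>v v) = \<nu> * ip (u m) v" using Gv u[OF m] v by (simp add: ip_smult_right)
      moreover have "ip (u m) (G t *\<^sub>v v) = ip (u m) (H *\<^sub>v v) + (\<Sum>l<k. ((t - of_real (\<mu> l)) * ip (u l) v) * ip (u m) (u l))"
      proof -
        have "ip (u m) (vs n (\<lambda>l. ((t - of_real (\<mu> l)) * ip (u l) v) \<cdot>\<^sub>v u l) {..<k})
           = (\<Sum>l<k. ((t - of_real (\<mu> l)) * ip (u l) v) * ip (u m) (u l))"
          by (rule ip_vs_smult_right[OF u[OF m]]) (use u in auto)
        thus ?thesis using u[OF m] v H u by (simp add: Gmult ip_add_right[of _ n])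
      qed
      moreover have "ip (u m) (H *\<^sub>v v) = of_real (\<mu> m) * ip (u m) v"
        using herm_ip[OF h u[OF m] v(1)] eu[OF m] u[OF m] v by (simp add: ip_smult_left)
      ultimately have "\<nu> * ip (u m) v = t * ip (u m) v" using delta[OF m, of "\<lambda>l. (t - of_real (\<mu> l)) * ip (u l) v"]
        by (simp add: algebra_simps)
      thus ?thesis using ne by simp
    qed
    have "G t *\<^sub>v v = H *\<^sub>v v + vs n (\<lambda>l. ((t - of_real (\<mu> l)) * ip (u l) v) \<cdot>\<^sub>v u l) {..<k}"
      using v by (simp add: Gmult)
    also have "vs n (\<lambda>l. ((t - of_real (\<mu> l)) * ip (u l) v) \<cdot>\<^sub>v u l) {..<k} = vs n (\<lambda>l. 0\<^sub>v n) {..<k}"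
      using c0 u by (intro vs_cong) (auto simp: smult_zero_vec0)
    also have "vs n (\<lambda>l. 0\<^sub>v n) {..<k} = 0\<^sub>v n" by (rule eq_vecI) auto
    finally have "H *\<^sub>v v = \<nu> \<cdot>\<^sub>v v" using Gv H v by simp
    thus False using nw v c0 by blast
  qed
  have tr1: "mtrace (G t) = of_nat n * t" for t using trace_all_eig[OF Gc allt] by blast
  have uu: "(\<Sum>i<n. u l $ i * cnj (u l $ i)) = 1" if l: "l < k" for l
    using on[OF l l] u[OF l] by (simp add: ip_eq[of _ n] mult.commute)
  have tr2: "mtrace (G t) = mtrace H + (\<Sum>l<k. t - of_real (\<mu> l))" for t
  proof -
    have "mtrace (G t) = (\<Sum>i<n. H$$(i,i) + (\<Sum>l<k. (t - of_real (\<mu> l)) * (u l $ i * cnj (u l $ i))))"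
      unfolding mtrace_def G_def by simp
    also have "\<dots> = mtrace H + (\<Sum>l<k. (t - of_real (\<mu> l)) * (\<Sum>i<n. u l $ i * cnj (u l $ i)))"
      unfolding mtrace_def using H by (simp add: sum.distrib sum_distrib_left sum.swap[of _ "{..<n}"])
    also have "\<dots> = mtrace H + (\<Sum>l<k. t - of_real (\<mu> l))" using uu by simp
    finally show ?thesis .
  qed
  have "of_nat n * (0::complex) = mtrace H + (\<Sum>l<k. 0 - of_real (\<mu> l))" using tr1[of 0] tr2[of 0] by simp
  moreover have "of_nat n * (1::complex) = mtrace H + (\<Sum>l<k. 1 - of_real (\<mu> l))" using tr1[of 1] tr2[of 1] by simp
  ultimately have "(of_nat n :: complex) = of_nat k" by (simp add: sum_subtractf sum_negf algebra_simps)
  thus False using k by simp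
qed


lemma smult_mat_mv: "A \<in> carrier_mat n n \<Longrightarrow> v \<in> carrier_vec n \<Longrightarrow> (a \<cdot>\<^sub>m A) *\<^sub>v v = a \<cdot>\<^sub>v (A *\<^sub>v v)"
proof -
  assume A: "A \<in> carrier_mat n n" and v: "v \<in> carrier_vec n"
  show ?thesis
  proof (rule eq_vecI)
    fix i assume "i < dim_vec (a \<cdot>\<^sub>v (A *\<^sub>v v))"
    hence i: "i < n" using A by simp
    have "((a \<cdot>\<^sub>m A) *\<^sub>v v) $ i = (\<Sum>j<n. (a \<cdot>\<^sub>m A)$$(i,j) * v$j)" by (rule mv_eq) (use A v i in auto)
    also have "\<dots> = a * (\<Sum>j<n. A$$(i,j) * v$j)" using A i by (simp add: sum_distrib_left mult.assoc)
    also have "\<dots> = (a \<cdot>\<^sub>v (A *\<^sub>v v)) $ i" using A v i by (simp add: mv_eq)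
    finally show "((a \<cdot>\<^sub>m A) *\<^sub>v v) $ i = (a \<cdot>\<^sub>v (A *\<^sub>v v)) $ i" .
  qed (use A in auto)
qed

definition onb :: "nat \<Rightarrow> (nat \<Rightarrow> complex vec) \<Rightarrow> bool" where
  "onb n u \<longleftrightarrow> (\<forall>k<n. u k \<in> carrier_vec n) \<and> (\<forall>j<n. \<forall>k<n. ip (u j) (u k) = (if j = k then 1 else 0))"

lemma spectral_partial: assumes h: "hermitian n H"
  shows "k \<le> n \<Longrightarrow> \<exists>u \<mu>. (\<forall>l<k. u l \<in> carrier_vec n \<and> H *\<^sub>v u l = of_real (\<mu> l) \<cdot>\<^sub>v u l) \<and>
     (\<forall>j<k. \<forall>l<k. ip (u j) (u l) = (if j = l then 1 else 0))"
proof (induction k)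
  case 0 show ?case by auto
next
  case (Suc k)
  have H: "H \<in> carrier_mat n n" using h herm_carrier by auto
  have "k \<le> n" using Suc.prems by simp
  then obtain u \<mu> where A: "\<forall>l<k. u l \<in> carrier_vec n \<and> H *\<^sub>v u l = of_real (\<mu> l) \<cdot>\<^sub>v u l"
    and B: "\<forall>j<k. \<forall>l<k. ip (u j) (u l) = (if j = l then 1 else 0)" using Suc.IH by blast
  have u: "\<And>l. l<k \<Longrightarrow> u l \<in> carrier_vec n" and eu: "\<And>l. l<k \<Longrightarrow> H *\<^sub>v u l = of_real (\<mu> l) \<cdot>\<^sub>v u l"
    and on: "\<And>j l. j<k \<Longrightarrow> l<k \<Longrightarrow> ip (u j) (u l) = (if j = l then 1 else 0)" using A B by auto
  have kn: "k < n" using Suc.prems by simp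
  from ev_step[of n H k u \<mu>, OF h kn u eu on] obtain w \<nu> where w: "w \<in> carrier_vec n" "w \<noteq> 0\<^sub>v n"
    and Hw: "H *\<^sub>v w = \<nu> \<cdot>\<^sub>v w" and wo: "\<And>l. l<k \<Longrightarrow> ip (u l) w = 0" by auto
  define r where "r = Re (ip w w)"
  have r: "r > 0" unfolding r_def using ip_self_pos[OF w] .
  have ww: "ip w w = of_real r" unfolding r_def using ip_self_Im[OF w(1)] by (simp add: complex_eq_iff)
  have "ip w (H *\<^sub>v w) = \<nu> * of_real r" using Hw w ww by (simp add: ip_smult_right)
  hence "Im (\<nu> * of_real r) = 0" using herm_real(2)[OF h w(1)] by simp
  hence Im\<nu>: "Im \<nu> = 0" using r by simp
  define c where "c = 1 / sqrt r"
  define w' where "w' = of_real c \<cdot>\<^sub>v w"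
  have w'c: "w' \<in> carrier_vec n" unfolding w'_def using w by simp
  have "ip w' w' = of_real (c * c * r)" unfolding w'_def using w ww by (simp add: ip_smult_left ip_smult_right)
  also have "c * c * r = 1" unfolding c_def using r by (simp add: real_sqrt_mult[symmetric])
  finally have w'1: "ip w' w' = 1" by simp
  have Hw': "H *\<^sub>v w' = of_real (Re \<nu>) \<cdot>\<^sub>v w'"
  proof -
    have "H *\<^sub>v w' = of_real c \<cdot>\<^sub>v (\<nu> \<cdot>\<^sub>v w)" unfolding w'_def using H w Hw by (simp add: mult_mat_vec)
    also have "\<dots> = of_real (Re \<nu>) \<cdot>\<^sub>v w'"
    proof -
      have "of_real (Re \<nu>) = \<nu>" using Im\<nu> by (simp add: complex_eq_iff)
      thus ?thesis unfolding w'_def by (simp add: smult_smult_assoc mult.commute)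
    qed
    finally show ?thesis .
  qed
  have w'o: "ip (u l) w' = 0" "ip w' (u l) = 0" if "l < k" for l
  proof -
    show "ip (u l) w' = 0" unfolding w'_def using wo[OF that] u[OF that] w by (simp add: ip_smult_right)
    thus "ip w' (u l) = 0" using ip_conj[OF u[OF that] w'c] by simp
  qed
  show ?case
  proof (intro exI[of _ "u(k := w')"] exI[of _ "\<mu>(k := Re \<nu>)"] conjI allI impI)
    fix l assume "l < Suc k"
    thus "(u(k := w')) l \<in> carrier_vec n" "H *\<^sub>v (u(k := w')) l = of_real ((\<mu>(k := Re \<nu>)) l) \<cdot>\<^sub>v (u(k := w')) l"
      using u eu w'c Hw' by (auto simp: less_Suc_eq)
  next
    fix j l assume "j < Suc k" "l < Suc k"
    thus "ip ((u(k := w')) j) ((u(k := w')) l) = (if j = l then 1 else 0)"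
      using on w'o w'1 by (auto simp: less_Suc_eq)
  qed
qed

lemma spectral: assumes h: "hermitian n H"
  shows "\<exists>u \<mu>. onb n u \<and> (\<forall>k<n. H *\<^sub>v u k = of_real (\<mu> k) \<cdot>\<^sub>v u k)"
  using spectral_partial[OF h le_refl] unfolding onb_def by blast

lemma basis_complete: assumes M: "M \<in> carrier_mat n n" and v: "\<And>k. k < n \<Longrightarrow> v k \<in> carrier_vec n"
  and on: "\<And>j k. j < n \<Longrightarrow> k < n \<Longrightarrow> ip (v j) (M *\<^sub>v v k) = (if j = k then 1 else 0)"
  and x: "x \<in> carrier_vec n"
  shows "x = vs n (\<lambda>k. ip (v k) (M *\<^sub>v x) \<cdot>\<^sub>v v k) {..<n}"
proof -
  define V where "V = mat n n (\<lambda>(i,k). v k $ i)"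
  define W where "W = mat n n (\<lambda>(k,i). \<Sum>l<n. cnj (v k $ l) * M$$(l,i))"
  have V: "V \<in> carrier_mat n n" and W: "W \<in> carrier_mat n n" unfolding V_def W_def by auto
  have vd: "\<And>k. k < n \<Longrightarrow> dim_vec (v k) = n" using v by auto
  have WV: "W * V = 1\<^sub>m n"
  proof (rule eq_matI)
    fix j k assume "j < dim_row (1\<^sub>m n :: complex mat)" "k < dim_col (1\<^sub>m n :: complex mat)"
    hence j: "j < n" and k: "k < n" by auto
    have "(W * V) $$ (j,k) = (\<Sum>i<n. (\<Sum>l<n. cnj (v j $ l) * M$$(l,i)) * v k $ i)"
      using mm_eq[OF W V j k] j k by (simp add: W_def V_def)
    also have "\<dots> = (\<Sum>i<n. \<Sum>l<n. cnj (v j $ l) * (M$$(l,i) * v k $ i))"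
      by (simp add: sum_distrib_right mult.assoc)
    also have "\<dots> = (\<Sum>l<n. \<Sum>i<n. cnj (v j $ l) * (M$$(l,i) * v k $ i))" by (rule sum.swap)
    also have "\<dots> = ip (v j) (M *\<^sub>v v k)"
      using v[OF j] v[OF k] M by (simp add: ip_eq[of _ n] mv_eq sum_distrib_left)
    also have "\<dots> = 1\<^sub>m n $$ (j,k)" using on[OF j k] j k by simp
    finally show "(W * V) $$ (j,k) = 1\<^sub>m n $$ (j,k)" .
  qed (use W V in auto)
  have VW: "V * W = 1\<^sub>m n" using mat_mult_left_right_inverse[OF W V WV] .
  have "x = (V * W) *\<^sub>v x" using VW x by simp
  also have "\<dots> = V *\<^sub>v (W *\<^sub>v x)" using V W x by simp
  also have "\<dots> = vs n (\<lambda>k. ip (v k) (M *\<^sub>v x) \<cdot>\<^sub>v v k) {..<n}"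
  proof (rule eq_vecI)
    fix i assume "i < dim_vec (vs n (\<lambda>k. ip (v k) (M *\<^sub>v x) \<cdot>\<^sub>v v k) {..<n})"
    hence i: "i < n" by simp
    have Wx: "(W *\<^sub>v x) $ k = ip (v k) (M *\<^sub>v x)" if k: "k < n" for k
    proof -
      have "(W *\<^sub>v x) $ k = (\<Sum>i<n. (\<Sum>l<n. cnj (v k $ l) * M$$(l,i)) * x $ i)"
        using mv_eq[OF W x k] k by (simp add: W_def)
      also have "\<dots> = (\<Sum>i<n. \<Sum>l<n. cnj (v k $ l) * (M$$(l,i) * x $ i))"
        by (simp add: sum_distrib_right mult.assoc)
      also have "\<dots> = (\<Sum>l<n. \<Sum>i<n. cnj (v k $ l) * (M$$(l,i) * x $ i))" by (rule sum.swap)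
      also have "\<dots> = ip (v k) (M *\<^sub>v x)"
        using v[OF k] x M by (simp add: ip_eq[of _ n] mv_eq sum_distrib_left)
      finally show ?thesis .
    qed
    have "(V *\<^sub>v (W *\<^sub>v x)) $ i = (\<Sum>k<n. v k $ i * (W *\<^sub>v x) $ k)"
      using mv_eq[OF V _ i, of "W *\<^sub>v x"] W x i by (simp add: V_def)
    also have "\<dots> = (\<Sum>k<n. ip (v k) (M *\<^sub>v x) * v k $ i)" using Wx by (simp add: mult.commute)
    also have "\<dots> = vs n (\<lambda>k. ip (v k) (M *\<^sub>v x) \<cdot>\<^sub>v v k) {..<n} $ i"
      using i vd by simp
    finally show "(V *\<^sub>v (W *\<^sub>v x)) $ i = vs n (\<lambda>k. ip (v k) (M *\<^sub>v x) \<cdot>\<^sub>v v k) {..<n} $ i" .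
  qed (use V in auto)
  finally show ?thesis .
qed

lemma onb_complete: assumes "onb n u" "x \<in> carrier_vec n"
  shows "x = vs n (\<lambda>k. ip (u k) x \<cdot>\<^sub>v u k) {..<n}"
proof -
  have "x = vs n (\<lambda>k. ip (u k) (1\<^sub>m n *\<^sub>v x) \<cdot>\<^sub>v u k) {..<n}"
    using assms by (intro basis_complete) (auto simp: onb_def)
  thus ?thesis using assms(2) by simp
qed

lemma mv_unit: fixes A :: "complex mat" assumes A: "A \<in> carrier_mat n n" and i: "i < n" and j: "j < n"
  shows "(A *\<^sub>v unit_vec n j) $ i = A $$ (i,j)"
proof -
  have "(A *\<^sub>v unit_vec n j) $ i = (\<Sum>l<n. A$$(i,l) * unit_vec n j $ l)" using A i by (simp add: mv_eq)
  also have "\<dots> = (\<Sum>l<n. if l = j then A$$(i,l) else 0)" by (intro sum.cong refl) (auto simp: unit_vec_def)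
  also have "\<dots> = A $$ (i,j)" using j by simp
  finally show ?thesis .
qed

lemma ip_unit: assumes w: "w \<in> carrier_vec n" and i: "i < n"
  shows "ip (unit_vec n i) w = w $ i"
proof -
  have "ip (unit_vec n i) w = (\<Sum>l<n. cnj (unit_vec n i $ l) * w $ l)" using w by (simp add: ip_eq[of _ n])
  also have "\<dots> = (\<Sum>l<n. if l = i then w $ l else 0)" by (intro sum.cong refl) (auto simp: unit_vec_def)
  also have "\<dots> = w $ i" using i by simp
  finally show ?thesis .
qed

lemma mat_eq_vec: fixes A B :: "complex mat" assumes A: "A \<in> carrier_mat n n" and B: "B \<in> carrier_mat n n"
  and eq: "\<And>x. x \<in> carrier_vec n \<Longrightarrow> A *\<^sub>v x = B *\<^sub>v x"
  shows "A = B"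
proof (rule eq_matI)
  fix i j assume i: "i < dim_row B" and j: "j < dim_col B"
  hence i': "i < n" and j': "j < n" using B by auto
  have "(A *\<^sub>v unit_vec n j) $ i = A $$ (i,j)" using mv_unit[OF A i' j'] .
  moreover have "(B *\<^sub>v unit_vec n j) $ i = B $$ (i,j)" using mv_unit[OF B i' j'] .
  ultimately show "A $$ (i,j) = B $$ (i,j)" using eq[of "unit_vec n j"] by simp
qed (use A B in auto)

lemma mat_eq_on_basis: assumes A: "A \<in> carrier_mat n n" and B: "B \<in> carrier_mat n n" and u: "onb n u"
  and eq: "\<And>k. k < n \<Longrightarrow> A *\<^sub>v u k = B *\<^sub>v u k"
  shows "A = B"
proof (rule mat_eq_vec[OF A B])
  fix x :: "complex vec" assume x: "x \<in> carrier_vec n"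
  have uc: "\<And>k. k \<in> {..<n} \<Longrightarrow> u k \<in> carrier_vec n" using u by (auto simp: onb_def)
  have xe: "x = vs n (\<lambda>k. ip (u k) x \<cdot>\<^sub>v u k) {..<n}" using onb_complete[OF u x] .
  have "A *\<^sub>v x = vs n (\<lambda>k. A *\<^sub>v (ip (u k) x \<cdot>\<^sub>v u k)) {..<n}"
    by (subst xe, rule mat_vs[OF A]) (use uc in auto)
  also have "\<dots> = vs n (\<lambda>k. B *\<^sub>v (ip (u k) x \<cdot>\<^sub>v u k)) {..<n}"
    using uc A B eq by (intro vs_cong) (auto simp: mult_mat_vec)
  also have "\<dots> = B *\<^sub>v x"
    by (subst (2) xe, rule mat_vs[OF B, symmetric]) (use uc in auto)
  finally show "A *\<^sub>v x = B *\<^sub>v x" .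
qed

lemma herm_by_ip: assumes A: "A \<in> carrier_mat n n"
  and s: "\<And>x y. x \<in> carrier_vec n \<Longrightarrow> y \<in> carrier_vec n \<Longrightarrow> ip x (A *\<^sub>v y) = ip (A *\<^sub>v x) y"
  shows "hermitian n A"
proof -
  have ent: "A $$ (i,j) = ip (unit_vec n i) (A *\<^sub>v unit_vec n j)" if "i < n" "j < n" for i j
    using that A by (simp add: ip_unit mv_unit)
  have "mat_adjoint A = A"
  proof (rule eq_matI)
    fix i j assume "i < dim_row A" "j < dim_col A"
    hence i: "i < n" and j: "j < n" using A by auto
    have "mat_adjoint A $$ (i,j) = cnj (A $$ (j,i))" using A i j unfolding mat_adjoint_def by (simp add: mat_of_rows_def)
    also have "\<dots> = cnj (ip (A *\<^sub>v unit_vec n j) (unit_vec n i))" using ent[OF j i] s[of "unit_vec n j" "unit_vec n i"] by simp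
    also have "\<dots> = ip (unit_vec n i) (A *\<^sub>v unit_vec n j)" by (rule ip_conj[of _ n]) (use A in auto)
    also have "\<dots> = A $$ (i,j)" using ent[OF i j] by simp
    finally show "mat_adjoint A $$ (i,j) = A $$ (i,j)" .
  qed (use A in \<open>auto simp: mat_adjoint_def\<close>)
  thus ?thesis using A unfolding hermitian_def by auto
qed


definition mfun :: "nat \<Rightarrow> (nat \<Rightarrow> complex vec) \<Rightarrow> (nat \<Rightarrow> real) \<Rightarrow> complex mat" where
  "mfun n u f = mat n n (\<lambda>(i,j). \<Sum>k<n. of_real (f k) * (u k $ i * cnj (u k $ j)))"

lemma mfun_carrier[simp]: "mfun n u f \<in> carrier_mat n n" unfolding mfun_def by auto
lemma mfun_dim[simp]: "dim_row (mfun n u f) = n" "dim_col (mfun n u f) = n" unfolding mfun_def by auto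

lemma onb_carrier: "onb n u \<Longrightarrow> k < n \<Longrightarrow> u k \<in> carrier_vec n" unfolding onb_def by auto
lemma onb_dim: "onb n u \<Longrightarrow> k < n \<Longrightarrow> dim_vec (u k) = n" unfolding onb_def by auto
lemma onb_ip: "onb n u \<Longrightarrow> j < n \<Longrightarrow> k < n \<Longrightarrow> ip (u j) (u k) = (if j = k then 1 else 0)" unfolding onb_def by auto

lemma mfun_mv: assumes u: "onb n u" and x: "x \<in> carrier_vec n"
  shows "mfun n u f *\<^sub>v x = vs n (\<lambda>k. (of_real (f k) * ip (u k) x) \<cdot>\<^sub>v u k) {..<n}"
proof (rule eq_vecI)
  fix i assume "i < dim_vec (vs n (\<lambda>k. (of_real (f k) * ip (u k) x) \<cdot>\<^sub>v u k) {..<n})"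
  hence i: "i < n" by simp
  have "(mfun n u f *\<^sub>v x) $ i = (\<Sum>j<n. (\<Sum>k<n. of_real (f k) * (u k $ i * cnj (u k $ j))) * x $ j)"
    using i x by (subst mv_eq[OF mfun_carrier]) (auto simp: mfun_def)
  also have "\<dots> = (\<Sum>j<n. \<Sum>k<n. of_real (f k) * u k $ i * (cnj (u k $ j) * x $ j))"
    by (simp add: sum_distrib_right mult.assoc)
  also have "\<dots> = (\<Sum>k<n. \<Sum>j<n. of_real (f k) * u k $ i * (cnj (u k $ j) * x $ j))" by (rule sum.swap)
  also have "\<dots> = (\<Sum>k<n. (of_real (f k) * ip (u k) x) * u k $ i)"
    using u x by (intro sum.cong refl) (simp add: ip_eq[of _ n x] onb_carrier sum_distrib_left mult.commute mult.left_commute)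
  finally show "(mfun n u f *\<^sub>v x) $ i = vs n (\<lambda>k. (of_real (f k) * ip (u k) x) \<cdot>\<^sub>v u k) {..<n} $ i"
    using i u by (auto simp: onb_dim intro!: sum.cong)
qed auto

lemma vs_delta: assumes k: "k < n" and w: "w \<in> carrier_vec n"
  and f: "\<And>l. l < n \<Longrightarrow> f l = (if l = k then w else 0\<^sub>v n)"
  shows "vs n f {..<n} = w"
proof (rule eq_vecI)
  fix i assume "i < dim_vec w" hence i: "i < n" using w by auto
  have "vs n f {..<n} $ i = (\<Sum>l<n. f l $ i)" using i by simp
  also have "\<dots> = (\<Sum>l<n. if l = k then w $ i else 0)"
    using i f by (intro sum.cong refl) simp
  also have "\<dots> = w $ i" using k by simp
  finally show "vs n f {..<n} $ i = w $ i" .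
qed (use w in auto)

lemma onb_coeff_delta: assumes u: "onb n u" and k: "k < n"
  shows "vs n (\<lambda>l. (c l * ip (u l) (u k)) \<cdot>\<^sub>v u l) {..<n} = c k \<cdot>\<^sub>v u k"
  using u k by (intro vs_delta) (auto simp: onb_ip onb_carrier smult_zero_vec0)

lemma mfun_eig: assumes u: "onb n u" and k: "k < n"
  shows "mfun n u f *\<^sub>v u k = of_real (f k) \<cdot>\<^sub>v u k"
  using mfun_mv[OF u onb_carrier[OF u k]] onb_coeff_delta[OF u k, of "\<lambda>l. of_real (f l)"] by simp

lemma mfun_herm: "hermitian n (mfun n u f)"
proof -
  have "mat_adjoint (mfun n u f) = mfun n u f"
  proof (rule eq_matI)
    fix i j assume "i < dim_row (mfun n u f)" "j < dim_col (mfun n u f)"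
    hence i: "i < n" and j: "j < n" by auto
    show "mat_adjoint (mfun n u f) $$ (i,j) = mfun n u f $$ (i,j)"
      using i j unfolding mat_adjoint_def by (simp add: mat_of_rows_def mfun_def cnj_sum mult.commute mult.left_commute)
  qed (auto simp: mat_adjoint_def)
  thus ?thesis unfolding hermitian_def by auto
qed

lemma mfun_ip: assumes u: "onb n u" and x: "x \<in> carrier_vec n"
  shows "ip x (mfun n u f *\<^sub>v x) = of_real (\<Sum>k<n. f k * (cmod (ip (u k) x))\<^sup>2)"
proof -
  have "ip x (mfun n u f *\<^sub>v x) = (\<Sum>k<n. (of_real (f k) * ip (u k) x) * ip x (u k))"
    unfolding mfun_mv[OF u x] by (rule ip_vs_smult_right[OF x]) (use u in \<open>auto simp: onb_carrier\<close>)
  also have "\<dots> = (\<Sum>k<n. of_real (f k * (cmod (ip (u k) x))\<^sup>2))"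
  proof (intro sum.cong refl)
    fix k assume "k \<in> {..<n}"
    hence "ip x (u k) = cnj (ip (u k) x)" using ip_conj[OF onb_carrier[OF u] x] by simp
    moreover have "ip (u k) x * cnj (ip (u k) x) = of_real ((cmod (ip (u k) x))\<^sup>2)"
      by (rule complex_norm_square[symmetric])
    ultimately show "(of_real (f k) * ip (u k) x) * ip x (u k) = of_real (f k * (cmod (ip (u k) x))\<^sup>2)"
      by (simp only: mult.assoc of_real_mult)
  qed
  finally show ?thesis by simp
qed

lemma onb_nonzero_coeff: fixes x :: "complex vec" assumes u: "onb n u" and x: "x \<in> carrier_vec n" and nz: "x \<noteq> 0\<^sub>v n"
  shows "\<exists>k<n. ip (u k) x \<noteq> 0"
proof (rule ccontr)
  assume "\<not> ?thesis"
  hence z: "\<And>k. k < n \<Longrightarrow> ip (u k) x = 0" by auto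
  have "x = vs n (\<lambda>k. ip (u k) x \<cdot>\<^sub>v u k) {..<n}" using onb_complete[OF u x] .
  also have "\<dots> = vs n (\<lambda>k. 0\<^sub>v n) {..<n}" using z u by (intro vs_cong) (auto simp: onb_carrier smult_zero_vec0)
  also have "\<dots> = 0\<^sub>v n" by (rule eq_vecI) auto
  finally show False using nz by simp
qed

lemma mfun_pd: assumes u: "onb n u" and f: "\<And>k. k < n \<Longrightarrow> f k > 0"
  shows "pos_def n (mfun n u f)"
  unfolding pos_def_def
proof (intro conjI ballI impI mfun_herm)
  fix x :: "complex vec" assume x: "x \<in> carrier_vec n" and nz: "x \<noteq> 0\<^sub>v n"
  obtain k where k: "k < n" "ip (u k) x \<noteq> 0" using onb_nonzero_coeff[OF u x nz] by auto
  have "(\<Sum>k<n. f k * (cmod (ip (u k) x))\<^sup>2) > 0"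
  proof (rule sum_pos2[of "{..<n}" k])
    show "0 < f k * (cmod (ip (u k) x))\<^sup>2" using f[OF k(1)] k(2) by simp
  next
    fix i assume "i \<in> {..<n}"
    hence "f i \<ge> 0" using f by (simp add: less_imp_le)
    thus "0 \<le> f i * (cmod (ip (u i) x))\<^sup>2" by simp
  qed (use k in auto)
  thus "Re (ip x (mfun n u f *\<^sub>v x)) > 0" using mfun_ip[OF u x] by simp
qed

lemma pd_herm: "pos_def n T \<Longrightarrow> hermitian n T" unfolding pos_def_def by auto
lemma pd_carrier: "pos_def n T \<Longrightarrow> T \<in> carrier_mat n n" unfolding pos_def_def hermitian_def by auto

lemma pd_eig_pos: assumes T: "pos_def n T" and u: "onb n u" and k: "k < n"
  and e: "T *\<^sub>v u k = of_real (t k) \<cdot>\<^sub>v u k"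
  shows "t k > 0"
proof -
  have uc: "u k \<in> carrier_vec n" using onb_carrier[OF u k] .
  have "u k \<noteq> 0\<^sub>v n" using onb_ip[OF u k k] ip_zero_left[OF uc] by auto
  hence "Re (ip (u k) (T *\<^sub>v u k)) > 0" using T uc unfolding pos_def_def by auto
  thus ?thesis using e uc onb_ip[OF u k k] by (simp add: ip_smult_right)
qed

lemma sqrt_unique: assumes T: "T \<in> carrier_mat n n" and u: "onb n u"
  and e: "\<And>k. k < n \<Longrightarrow> T *\<^sub>v u k = of_real (t k) \<cdot>\<^sub>v u k" and tnn: "\<And>k. k < n \<Longrightarrow> t k \<ge> 0"
  and S: "pos_def n S" and SS: "S * S = T"
  shows "S = mfun n u (\<lambda>k. sqrt (t k))"
proof (rule mat_eq_on_basis[OF pd_carrier[OF S] mfun_carrier u])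
  fix k assume k: "k < n"
  have Sc: "S \<in> carrier_mat n n" using pd_carrier[OF S] .
  have uc: "u k \<in> carrier_vec n" using onb_carrier[OF u k] .
  define s where "s = sqrt (t k)"
  have tk: "t k \<ge> 0" using tnn k by blast
  have ss: "s * s = t k" unfolding s_def using tk by simp
  have s0: "s \<ge> 0" unfolding s_def using tk by simp
  define z where "z = S *\<^sub>v u k - of_real s \<cdot>\<^sub>v u k"
  have zc: "z \<in> carrier_vec n" unfolding z_def using Sc uc by simp
  have SSu: "S *\<^sub>v (S *\<^sub>v u k) = of_real (t k) \<cdot>\<^sub>v u k" using e[OF k] SS Sc uc
    by (metis assoc_mult_mat_vec)
  have Sz: "S *\<^sub>v z = (- of_real s) \<cdot>\<^sub>v z"
  proof -
    have "S *\<^sub>v z = S *\<^sub>v (S *\<^sub>v u k) - of_real s \<cdot>\<^sub>v (S *\<^sub>v u k)"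
      unfolding z_def using Sc uc by (simp add: mult_minus_distrib_mat_vec[of S n n] mult_mat_vec)
    also have "\<dots> = (- of_real s) \<cdot>\<^sub>v z" unfolding SSu z_def
      by (rule eq_vecI) (use Sc uc ss in \<open>auto simp: algebra_simps of_real_mult[symmetric]\<close>)
    finally show ?thesis .
  qed
  have "z = 0\<^sub>v n"
  proof (rule ccontr)
    assume nz: "z \<noteq> 0\<^sub>v n"
    have "Re (ip z (S *\<^sub>v z)) > 0" using S zc nz unfolding pos_def_def by auto
    moreover have "Re (ip z (S *\<^sub>v z)) = - s * Re (ip z z)" using Sz zc by (simp add: ip_smult_right)
    moreover have "Re (ip z z) \<ge> 0" using ip_self_Re[OF zc] .
    ultimately show False using s0 mult_nonneg_nonneg[of s "Re (ip z z)"] by linarith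
  qed
  hence z0: "z = 0\<^sub>v n" .
  have "S *\<^sub>v u k = of_real s \<cdot>\<^sub>v u k"
  proof (rule eq_vecI)
    fix i assume i: "i < dim_vec (of_real s \<cdot>\<^sub>v u k)"
    hence i': "i < n" using uc by simp
    have "z $ i = 0" using z0 i' by simp
    thus "(S *\<^sub>v u k) $ i = (of_real s \<cdot>\<^sub>v u k) $ i" unfolding z_def using i' Sc uc by simp
  qed (use Sc uc in auto)
  thus "S *\<^sub>v u k = mfun n u (\<lambda>k. sqrt (t k)) *\<^sub>v u k" using mfun_eig[OF u k] unfolding s_def by simp
qed


lemma mfun_mult: assumes u: "onb n u"
  shows "mfun n u f * mfun n u g = mfun n u (\<lambda>k. f k * g k)"
proof (rule mat_eq_on_basis[OF _ mfun_carrier u])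
  show "mfun n u f * mfun n u g \<in> carrier_mat n n" using mult_carrier_mat[OF mfun_carrier mfun_carrier] .
  fix k assume k: "k < n"
  have uc: "u k \<in> carrier_vec n" using onb_carrier[OF u k] .
  have "(mfun n u f * mfun n u g) *\<^sub>v u k = mfun n u f *\<^sub>v (mfun n u g *\<^sub>v u k)"
    using uc by (simp add: assoc_mult_mat_vec[of _ n n _ n])
  also have "\<dots> = of_real (f k * g k) \<cdot>\<^sub>v u k"
    using uc by (simp add: mfun_eig[OF u k] mult_mat_vec[of _ n n] smult_smult_assoc mult.commute)
  also have "\<dots> = mfun n u (\<lambda>k. f k * g k) *\<^sub>v u k" using mfun_eig[OF u k] by simp
  finally show "(mfun n u f * mfun n u g) *\<^sub>v u k = mfun n u (\<lambda>k. f k * g k) *\<^sub>v u k" .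
qed

lemma mfun_one: assumes u: "onb n u" and f: "\<And>k. k < n \<Longrightarrow> f k = 1"
  shows "mfun n u f = 1\<^sub>m n"
proof (rule mat_eq_on_basis[OF mfun_carrier _ u])
  fix k assume k: "k < n"
  show "mfun n u f *\<^sub>v u k = 1\<^sub>m n *\<^sub>v u k" using mfun_eig[OF u k] f[OF k] onb_carrier[OF u k] by simp
qed simp

lemma mat_eig_eq_mfun: assumes T: "T \<in> carrier_mat n n" and u: "onb n u"
  and e: "\<And>k. k < n \<Longrightarrow> T *\<^sub>v u k = of_real (t k) \<cdot>\<^sub>v u k"
  shows "T = mfun n u t"
  using e mfun_eig[OF u] by (intro mat_eq_on_basis[OF T mfun_carrier u]) auto

lemma msqrt_eq: assumes T: "pos_def n T" and u: "onb n u"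
  and e: "\<And>k. k < n \<Longrightarrow> T *\<^sub>v u k = of_real (t k) \<cdot>\<^sub>v u k"
  shows "msqrt n T = mfun n u (\<lambda>k. sqrt (t k))"
proof -
  have tp: "\<And>k. k < n \<Longrightarrow> t k > 0"
  proof -
    fix k assume k: "k < n" show "t k > 0" by (rule pd_eig_pos[of n T u k t, OF T u k e[OF k]])
  qed
  have Tc: "T \<in> carrier_mat n n" using pd_carrier[OF T] .
  have TM: "T = mfun n u t" using mat_eig_eq_mfun[OF Tc u e] .
  let ?S = "mfun n u (\<lambda>k. sqrt (t k))"
  have P: "pos_def n ?S \<and> ?S * ?S = T"
  proof
    show "pos_def n ?S" using tp by (intro mfun_pd[OF u]) auto
    have "?S * ?S = mfun n u (\<lambda>k. sqrt (t k) * sqrt (t k))" using mfun_mult[OF u] .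
    also have "\<dots> = mfun n u t" unfolding mfun_def using tp
      by (intro eq_matI) (auto intro!: sum.cong simp: less_imp_le)
    finally show "?S * ?S = T" using TM by simp
  qed
  have "(THE S. pos_def n S \<and> S * S = T) = ?S"
  proof (rule the_equality)
    show "pos_def n ?S \<and> ?S * ?S = T" using P .
    fix S assume "pos_def n S \<and> S * S = T"
    thus "S = ?S" using sqrt_unique[OF Tc u e] tp by (auto intro: less_imp_le)
  qed
  thus ?thesis unfolding msqrt_def .
qed

definition peb :: "nat \<Rightarrow> complex mat \<Rightarrow> complex mat \<Rightarrow> (nat \<Rightarrow> complex vec) \<Rightarrow> (nat \<Rightarrow> real) \<Rightarrow> bool" where
  "peb n A M v d \<longleftrightarrow> (\<forall>k<n. v k \<in> carrier_vec n \<and> A *\<^sub>v v k = of_real (d k) \<cdot>\<^sub>v (M *\<^sub>v v k)) \<and>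
     (\<forall>j<n. \<forall>k<n. ip (v j) (M *\<^sub>v v k) = (if j = k then 1 else 0))"

lemma pencil: assumes A: "hermitian n A" and M: "pos_def n M"
  shows "\<exists>v d. peb n A M v d"
proof -
  have Ac: "A \<in> carrier_mat n n" using herm_carrier[OF A] .
  have Mc: "M \<in> carrier_mat n n" using pd_carrier[OF M] .
  obtain u m where u: "onb n u" and eu: "\<And>k. k < n \<Longrightarrow> M *\<^sub>v u k = of_real (m k) \<cdot>\<^sub>v u k"
    using spectral[OF pd_herm[OF M]] by blast
  have mp: "\<And>k. k < n \<Longrightarrow> m k > 0"
  proof -
    fix k assume k: "k < n" show "m k > 0" by (rule pd_eig_pos[of n M u k m, OF M u k eu[OF k]])
  qed
  define L where "L = mfun n u (\<lambda>k. sqrt (m k))"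
  define Li where "Li = mfun n u (\<lambda>k. 1 / sqrt (m k))"
  have Lc: "L \<in> carrier_mat n n" and Lic: "Li \<in> carrier_mat n n" unfolding L_def Li_def by auto
  have LL: "L * L = M"
  proof -
    have "L * L = mfun n u (\<lambda>k. sqrt (m k) * sqrt (m k))" unfolding L_def using mfun_mult[OF u] .
    also have "\<dots> = mfun n u m" unfolding mfun_def using mp
      by (intro eq_matI) (auto intro!: sum.cong simp: less_imp_le)
    finally show ?thesis using mat_eig_eq_mfun[OF Mc u eu] by simp
  qed
  have LLi: "L * Li = 1\<^sub>m n" unfolding L_def Li_def mfun_mult[OF u]
    using mp by (intro mfun_one[OF u]) (metis less_irrefl nonzero_mult_div_cancel_left real_sqrt_gt_0_iff mult_1_right times_divide_eq_right mult.commute)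
  have LiL: "Li * L = 1\<^sub>m n" unfolding L_def Li_def mfun_mult[OF u]
    using mp by (intro mfun_one[OF u]) (metis less_irrefl nonzero_mult_div_cancel_left real_sqrt_gt_0_iff mult_1_right times_divide_eq_right mult.commute)
  have Lh: "hermitian n L" and Lih: "hermitian n Li" unfolding L_def Li_def by (auto intro: mfun_herm)
  define B where "B = Li * A * Li"
  have Bc: "B \<in> carrier_mat n n" unfolding B_def using Lic Ac by simp
  have Bv: "B *\<^sub>v x = Li *\<^sub>v (A *\<^sub>v (Li *\<^sub>v x))" if "x \<in> carrier_vec n" for x
    unfolding B_def using that Lic Ac by (simp add: assoc_mult_mat_vec[of _ n n _ n])
  have Bh: "hermitian n B"
  proof (rule herm_by_ip[OF Bc])
    fix x y :: "complex vec" assume x: "x \<in> carrier_vec n" and y: "y \<in> carrier_vec n"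
    have "ip x (B *\<^sub>v y) = ip (Li *\<^sub>v x) (A *\<^sub>v (Li *\<^sub>v y))"
      using Bv[OF y] herm_ip[OF Lih x, of "A *\<^sub>v (Li *\<^sub>v y)"] Lic Ac y by simp
    also have "\<dots> = ip (A *\<^sub>v (Li *\<^sub>v x)) (Li *\<^sub>v y)" using herm_ip[OF A] x y Lic by simp
    also have "\<dots> = ip (B *\<^sub>v x) y"
      using Bv[OF x] herm_ip[OF Lih _ y, of "A *\<^sub>v (Li *\<^sub>v x)"] Lic Ac x by simp
    finally show "ip x (B *\<^sub>v y) = ip (B *\<^sub>v x) y" .
  qed
  obtain w e where w: "onb n w" and ew: "\<And>k. k < n \<Longrightarrow> B *\<^sub>v w k = of_real (e k) \<cdot>\<^sub>v w k"
    using spectral[OF Bh] by blast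
  define v where "v k = Li *\<^sub>v w k" for k
  have wc: "\<And>k. k < n \<Longrightarrow> w k \<in> carrier_vec n" using onb_carrier[OF w] .
  have vc: "\<And>k. k < n \<Longrightarrow> v k \<in> carrier_vec n" unfolding v_def using Lic wc by simp
  have Mv: "M *\<^sub>v v k = L *\<^sub>v w k" if k: "k < n" for k
  proof -
    have "M *\<^sub>v v k = L *\<^sub>v (L *\<^sub>v (Li *\<^sub>v w k))" unfolding v_def LL[symmetric]
      using Lc Lic wc[OF k] by (simp add: assoc_mult_mat_vec[of _ n n _ n])
    also have "L *\<^sub>v (Li *\<^sub>v w k) = w k" using LLi Lc Lic wc[OF k]
      by (metis assoc_mult_mat_vec one_mult_mat_vec)
    finally show ?thesis .
  qed
  have Av: "A *\<^sub>v v k = of_real (e k) \<cdot>\<^sub>v (M *\<^sub>v v k)" if k: "k < n" for k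
  proof -
    have "A *\<^sub>v v k = (L * Li) *\<^sub>v (A *\<^sub>v v k)" using LLi Ac vc[OF k] by simp
    also have "\<dots> = L *\<^sub>v (B *\<^sub>v w k)" using Lc Lic Ac wc[OF k] Bv[OF wc[OF k]]
      unfolding v_def by (simp add: assoc_mult_mat_vec[of _ n n _ n])
    also have "\<dots> = of_real (e k) \<cdot>\<^sub>v (L *\<^sub>v w k)" using ew[OF k] Lc wc[OF k] by (simp add: mult_mat_vec)
    finally show ?thesis using Mv[OF k] by simp
  qed
  have on: "ip (v j) (M *\<^sub>v v k) = (if j = k then 1 else 0)" if j: "j < n" and k: "k < n" for j k
  proof -
    have "ip (v j) (M *\<^sub>v v k) = ip (v j) (L *\<^sub>v w k)" by (simp only: Mv[OF k])
    also have "\<dots> = ip (Li *\<^sub>v w j) (L *\<^sub>v w k)" by (simp only: v_def)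
    also have "\<dots> = ip (w j) (Li *\<^sub>v (L *\<^sub>v w k))" using herm_ip[OF Lih wc[OF j], of "L *\<^sub>v w k"] Lc wc[OF k] by simp
    also have "Li *\<^sub>v (L *\<^sub>v w k) = w k" using LiL Lc Lic wc[OF k]
      by (metis assoc_mult_mat_vec one_mult_mat_vec)
    finally show ?thesis using onb_ip[OF w j k] by simp
  qed
  show ?thesis unfolding peb_def using vc Av on by blast
qed

lemma peb_carrier: "peb n A M v d \<Longrightarrow> k < n \<Longrightarrow> v k \<in> carrier_vec n" unfolding peb_def by auto
lemma peb_eig: "peb n A M v d \<Longrightarrow> k < n \<Longrightarrow> A *\<^sub>v v k = of_real (d k) \<cdot>\<^sub>v (M *\<^sub>v v k)" unfolding peb_def by auto
lemma peb_on: "peb n A M v d \<Longrightarrow> j < n \<Longrightarrow> k < n \<Longrightarrow> ip (v j) (M *\<^sub>v v k) = (if j = k then 1 else 0)" unfolding peb_def by auto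

lemma peb_expand: assumes p: "peb n A M v d" and M: "M \<in> carrier_mat n n" and x: "x \<in> carrier_vec n"
  shows "x = vs n (\<lambda>k. ip (v k) (M *\<^sub>v x) \<cdot>\<^sub>v v k) {..<n}"
  using p M x by (intro basis_complete) (auto simp: peb_carrier peb_on)

lemma peb_coord: assumes p: "peb n A M v d" and M: "M \<in> carrier_mat n n" and j: "j < n"
  shows "ip (v j) (M *\<^sub>v vs n (\<lambda>k. a k \<cdot>\<^sub>v v k) {..<n}) = a j"
proof -
  have vc: "\<And>k. k \<in> {..<n} \<Longrightarrow> v k \<in> carrier_vec n" using peb_carrier[OF p] by auto
  have "M *\<^sub>v vs n (\<lambda>k. a k \<cdot>\<^sub>v v k) {..<n} = vs n (\<lambda>k. M *\<^sub>v (a k \<cdot>\<^sub>v v k)) {..<n}"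
    using vc by (intro mat_vs[OF M]) auto
  also have "\<dots> = vs n (\<lambda>k. a k \<cdot>\<^sub>v (M *\<^sub>v v k)) {..<n}" using vc M by (intro vs_cong) (auto simp: mult_mat_vec)
  finally have e: "M *\<^sub>v vs n (\<lambda>k. a k \<cdot>\<^sub>v v k) {..<n} = vs n (\<lambda>k. a k \<cdot>\<^sub>v (M *\<^sub>v v k)) {..<n}" .
  have "ip (v j) (vs n (\<lambda>k. a k \<cdot>\<^sub>v (M *\<^sub>v v k)) {..<n}) = (\<Sum>k<n. a k * ip (v j) (M *\<^sub>v v k))"
    using vc M j by (intro ip_vs_smult_right) auto
  also have "\<dots> = (\<Sum>k<n. if k = j then a k else 0)" using peb_on[OF p j] by (intro sum.cong refl) auto
  also have "\<dots> = a j" using j by simp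
  finally show ?thesis using e by simp
qed

lemma peb_form: assumes p: "peb n A M v d" and M: "M \<in> carrier_mat n n" and C: "C \<in> carrier_mat n n"
  and Cv: "\<And>j k. j < n \<Longrightarrow> k < n \<Longrightarrow> ip (v j) (C *\<^sub>v v k) = (if j = k then c k else 0)"
  and x: "x \<in> carrier_vec n" and y: "y \<in> carrier_vec n"
  shows "ip x (C *\<^sub>v y) = (\<Sum>k<n. cnj (ip (v k) (M *\<^sub>v x)) * ip (v k) (M *\<^sub>v y) * c k)"
proof -
  have vc: "\<And>k. k \<in> {..<n} \<Longrightarrow> v k \<in> carrier_vec n" using peb_carrier[OF p] by auto
  define zx where "zx k = ip (v k) (M *\<^sub>v x)" for k
  define zy where "zy k = ip (v k) (M *\<^sub>v y)" for k
  have xe: "x = vs n (\<lambda>k. zx k \<cdot>\<^sub>v v k) {..<n}" unfolding zx_def by (rule peb_expand[OF p M x])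
  have ye: "y = vs n (\<lambda>k. zy k \<cdot>\<^sub>v v k) {..<n}" unfolding zy_def by (rule peb_expand[OF p M y])
  have Cy: "C *\<^sub>v y = vs n (\<lambda>k. zy k \<cdot>\<^sub>v (C *\<^sub>v v k)) {..<n}"
  proof -
    have "C *\<^sub>v y = vs n (\<lambda>k. C *\<^sub>v (zy k \<cdot>\<^sub>v v k)) {..<n}"
      by (subst ye, rule mat_vs[OF C]) (use vc in auto)
    also have "\<dots> = vs n (\<lambda>k. zy k \<cdot>\<^sub>v (C *\<^sub>v v k)) {..<n}" using vc C by (intro vs_cong) (auto simp: mult_mat_vec)
    finally show ?thesis .
  qed
  have "ip x (C *\<^sub>v y) = (\<Sum>k<n. zy k * ip x (C *\<^sub>v v k))"
    unfolding Cy using vc C x by (intro ip_vs_smult_right) auto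
  also have "\<dots> = (\<Sum>k<n. zy k * (\<Sum>j<n. cnj (zx j) * ip (v j) (C *\<^sub>v v k)))"
  proof (intro sum.cong refl)
    fix k assume k: "k \<in> {..<n}"
    have "ip x (C *\<^sub>v v k) = ip (vs n (\<lambda>j. zx j \<cdot>\<^sub>v v j) {..<n}) (C *\<^sub>v v k)" using xe by simp
    also have "\<dots> = (\<Sum>j<n. cnj (zx j) * ip (v j) (C *\<^sub>v v k))"
      using vc C k by (intro ip_vs_smult_left) auto
    finally show "zy k * ip x (C *\<^sub>v v k) = zy k * (\<Sum>j<n. cnj (zx j) * ip (v j) (C *\<^sub>v v k))" by simp
  qed
  also have "\<dots> = (\<Sum>k<n. zy k * cnj (zx k) * c k)"
  proof (intro sum.cong refl)
    fix k assume k: "k \<in> {..<n}"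
    have "(\<Sum>j<n. cnj (zx j) * ip (v j) (C *\<^sub>v v k)) = (\<Sum>j<n. if j = k then cnj (zx j) * c k else 0)"
      using Cv k by (intro sum.cong refl) auto
    also have "\<dots> = cnj (zx k) * c k" using k by simp
    finally show "zy k * (\<Sum>j<n. cnj (zx j) * ip (v j) (C *\<^sub>v v k)) = zy k * cnj (zx k) * c k" by simp
  qed
  finally show ?thesis unfolding zx_def zy_def by (simp add: mult.commute mult.left_commute)
qed

lemma peb_Cv: assumes p: "peb n A M v d" and A: "A \<in> carrier_mat n n" and M: "M \<in> carrier_mat n n"
  and j: "j < n" and k: "k < n"
  shows "ip (v j) ((A - of_real s \<cdot>\<^sub>m M) *\<^sub>v v k) = (if j = k then of_real (d k - s) else 0)"
proof -
  have vk: "v k \<in> carrier_vec n" and vj: "v j \<in> carrier_vec n" using peb_carrier[OF p] j k by auto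
  have "(A - of_real s \<cdot>\<^sub>m M) *\<^sub>v v k = A *\<^sub>v v k - (of_real s \<cdot>\<^sub>m M) *\<^sub>v v k"
    using A M vk by (simp add: minus_mult_distrib_mat_vec[of _ n n])
  also have "\<dots> = of_real (d k) \<cdot>\<^sub>v (M *\<^sub>v v k) - of_real s \<cdot>\<^sub>v (M *\<^sub>v v k)"
    using peb_eig[OF p k] M vk by (simp add: smult_mat_mv)
  finally have e: "(A - of_real s \<cdot>\<^sub>m M) *\<^sub>v v k = of_real (d k) \<cdot>\<^sub>v (M *\<^sub>v v k) - of_real s \<cdot>\<^sub>v (M *\<^sub>v v k)" .
  show ?thesis unfolding e using vj vk M peb_on[OF p j k]
    by (simp add: ip_minus_right[of _ n] ip_smult_right[of _ n])
qed

lemma peb_Cv0: assumes p: "peb n A M v d" and A: "A \<in> carrier_mat n n" and M: "M \<in> carrier_mat n n"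
  and j: "j < n" and k: "k < n"
  shows "ip (v j) (A *\<^sub>v v k) = (if j = k then of_real (d k) else 0)"
proof -
  have vk: "v k \<in> carrier_vec n" and vj: "v j \<in> carrier_vec n" using peb_carrier[OF p] j k by auto
  show ?thesis using peb_eig[OF p k] peb_on[OF p j k] vj vk M by (simp add: ip_smult_right[of _ n])
qed


definition pcg_r where "pcg_r Al T x0 i = fst (snd (pcg Al T x0 i))"

fun kv :: "complex mat \<Rightarrow> complex mat \<Rightarrow> complex vec \<Rightarrow> nat \<Rightarrow> complex vec" where
  "kv G T x0 0 = x0"
| "kv G T x0 (Suc m) = T *\<^sub>v (G *\<^sub>v kv G T x0 m)"

lemma vs_insert: assumes "finite K" "x \<notin> K" "f x \<in> carrier_vec n"
  shows "vs n f (insert x K) = f x + vs n f K"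
  by (rule eq_vecI) (use assms in auto)

lemma vs_empty: "vs n f {} = 0\<^sub>v n" by (rule eq_vecI) auto

context
  fixes n :: nat and G T :: "complex mat" and x0 :: "complex vec"
begin

abbreviation "X j \<equiv> pcg_x G T x0 j"
abbreviation "R j \<equiv> pcg_r G T x0 j"
abbreviation "Gm j \<equiv> pcg_gamma G T x0 j"
abbreviation "P j \<equiv> pcg_p G T x0 j"
definition "dl j = Gm j / ip (G *\<^sub>v P j) (P j)"

lemma pcg_0: "X 0 = x0" "R 0 = - (G *\<^sub>v x0)" "Gm 0 = ip (T *\<^sub>v R 0) (R 0)" "P 0 = T *\<^sub>v R 0"
  by (simp_all add: pcg_x_def pcg_r_def pcg_gamma_def pcg_p_def Let_def)

lemma pcg_S: "X (Suc j) = X j + dl j \<cdot>\<^sub>v P j" "R (Suc j) = R j - dl j \<cdot>\<^sub>v (G *\<^sub>v P j)"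
  "Gm (Suc j) = ip (T *\<^sub>v R (Suc j)) (R (Suc j))" "P (Suc j) = T *\<^sub>v R (Suc j) + (Gm (Suc j) / Gm j) \<cdot>\<^sub>v P j"
  by (cases "pcg G T x0 j"; simp add: pcg_x_def pcg_r_def pcg_gamma_def pcg_p_def dl_def pcg_step_def Let_def)+

lemma gm_def: "Gm j = ip (T *\<^sub>v R j) (R j)"
  by (cases j) (simp_all add: pcg_0 pcg_S)

definition "Vs k = {v. \<exists>a. v = vs n (\<lambda>l. a l \<cdot>\<^sub>v P l) {..<k}}"

context
  assumes G: "hermitian n G" and T: "hermitian n T" and x0: "x0 \<in> carrier_vec n"
begin

lemma Gc: "G \<in> carrier_mat n n" using herm_carrier[OF G] .
lemma Tc: "T \<in> carrier_mat n n" using herm_carrier[OF T] .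

lemma carr: "X j \<in> carrier_vec n \<and> R j \<in> carrier_vec n \<and> P j \<in> carrier_vec n"
proof (induction j)
  case 0 show ?case using x0 Gc Tc by (simp add: pcg_0)
next
  case (Suc j) thus ?case using Gc Tc by (simp add: pcg_S)
qed

lemma Xc[simp]: "X j \<in> carrier_vec n" and Rc[simp]: "R j \<in> carrier_vec n" and Pc[simp]: "P j \<in> carrier_vec n"
  using carr by auto

lemma Xd[simp]: "dim_vec (X j) = n" and Rd[simp]: "dim_vec (R j) = n" and Pd[simp]: "dim_vec (P j) = n"
  using carr by auto

lemma kvd[simp]: "dim_vec (kv G T x0 m) = n"
  by (induction m) (use x0 Gc Tc in auto)

lemma RX: "R j = - (G *\<^sub>v X j)"
proof (induction j)
  case 0 show ?case by (simp add: pcg_0)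
next
  case (Suc j)
  show ?case
    by (rule eq_vecI) (use Gc Suc in \<open>auto simp: pcg_S mult_add_distrib_mat_vec[OF Gc] mult_mat_vec[OF Gc] algebra_simps\<close>)
qed

lemma gm_real: "cnj (Gm j) = Gm j"
proof -
  have "Gm j = ip (R j) (T *\<^sub>v R j)" unfolding gm_def using herm_ip[OF T, of "R j" "R j"] by simp
  thus ?thesis using herm_real(1)[OF T, of "R j"] by simp
qed

lemma pi_real: "cnj (ip (G *\<^sub>v P j) (P j)) = ip (G *\<^sub>v P j) (P j)"
  using herm_real(1)[OF G, of "P j"] herm_ip[OF G, of "P j" "P j"] by simp

lemma dl_real: "cnj (dl j) = dl j" unfolding dl_def using gm_real pi_real by simp

lemma TR_ip: assumes z: "z \<in> carrier_vec n"
  shows "ip (T *\<^sub>v R (Suc m)) z = ip (P (Suc m)) z - cnj (Gm (Suc m) / Gm m) * ip (P m) z"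
proof -
  have "ip (P (Suc m)) z = ip (T *\<^sub>v R (Suc m)) z + cnj (Gm (Suc m) / Gm m) * ip (P m) z"
    unfolding pcg_S(4)[of m] using z Tc by (simp add: ip_add_left[of _ n] ip_smult_left[of _ n])
  thus ?thesis by simp
qed

lemma TR0_ip: "ip (T *\<^sub>v R 0) z = ip (P 0) z" by (simp add: pcg_0)

lemma GP_ip: assumes z: "z \<in> carrier_vec n" and d: "dl l \<noteq> 0"
  shows "ip (G *\<^sub>v P l) z = (ip (R l) z - ip (R (Suc l)) z) / cnj (dl l)"
proof -
  have "ip (R (Suc l)) z = ip (R l) z - cnj (dl l) * ip (G *\<^sub>v P l) z"
    unfolding pcg_S(2)[of l] using z Gc by (simp add: ip_minus_left[of _ n] ip_smult_left[of _ n])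
  thus ?thesis using d by (simp add: field_simps)
qed

lemma inv: assumes D: "\<And>l. l < i \<Longrightarrow> Gm l \<noteq> 0 \<and> ip (G *\<^sub>v P l) (P l) \<noteq> 0"
  shows "j \<le> i \<Longrightarrow> (\<forall>l<j. ip (P l) (R j) = 0) \<and> (\<forall>l<j. ip (G *\<^sub>v P l) (P j) = 0) \<and> ip (P j) (R j) = Gm j"
proof (induction j)
  case 0 show ?case by (simp add: pcg_0 gm_def)
next
  case (Suc j)
  hence ji: "j < i" by simp
  from Suc ji have IH1: "\<And>l. l < j \<Longrightarrow> ip (P l) (R j) = 0" and IH2: "\<And>l. l < j \<Longrightarrow> ip (G *\<^sub>v P l) (P j) = 0"
    and IH3: "ip (P j) (R j) = Gm j" by auto
  define \<pi> where "\<pi> = ip (G *\<^sub>v P j) (P j)"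
  have \<pi>0: "\<pi> \<noteq> 0" and g0: "Gm j \<noteq> 0" using D[OF ji] unfolding \<pi>_def by auto
  have dlj: "dl j = Gm j / \<pi>" unfolding dl_def \<pi>_def ..
  have dnz: "dl l \<noteq> 0" if "l \<le> j" for l using D[of l] that ji unfolding dl_def by auto
  have a: "ip (P l) (R (Suc j)) = 0" if l: "l \<le> j" for l
  proof -
    have "ip (P l) (R (Suc j)) = ip (P l) (R j) - dl j * ip (P l) (G *\<^sub>v P j)"
      unfolding pcg_S(2)[of j] using Gc by (simp add: ip_minus_right[of _ n] ip_smult_right[of _ n])
    also have "ip (P l) (G *\<^sub>v P j) = ip (G *\<^sub>v P l) (P j)" using herm_ip[OF G] by simp
    finally have e: "ip (P l) (R (Suc j)) = ip (P l) (R j) - dl j * ip (G *\<^sub>v P l) (P j)" .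
    show ?thesis
    proof (cases "l < j")
      case True thus ?thesis using e IH1 IH2 by simp
    next
      case False hence "l = j" using l by simp
      thus ?thesis using e IH3 dlj \<pi>0 unfolding \<pi>_def by simp
    qed
  qed
  have b: "ip (T *\<^sub>v R m) (R (Suc j)) = 0" if m: "m \<le> j" for m
  proof (cases m)
    case 0 thus ?thesis using a[of 0] TR0_ip by simp
  next
    case (Suc m') thus ?thesis using TR_ip[of "R (Suc j)" m'] a[of m] a[of m'] m by simp
  qed
  have b': "ip (R m) (T *\<^sub>v R (Suc j)) = 0" if m: "m \<le> j" for m
    using b[OF m] herm_ip[OF T, of "R m" "R (Suc j)"] by simp
  have c: "ip (G *\<^sub>v P l) (P (Suc j)) = 0" if l: "l \<le> j" for l
  proof -
    have e1: "ip (G *\<^sub>v P l) (P (Suc j)) = ip (G *\<^sub>v P l) (T *\<^sub>v R (Suc j)) + (Gm (Suc j) / Gm j) * ip (G *\<^sub>v P l) (P j)"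
      unfolding pcg_S(4)[of j] using Gc Tc by (simp add: ip_add_right[of _ n] ip_smult_right[of _ n])
    have e2: "ip (G *\<^sub>v P l) (T *\<^sub>v R (Suc j)) = (ip (R l) (T *\<^sub>v R (Suc j)) - ip (R (Suc l)) (T *\<^sub>v R (Suc j))) / cnj (dl l)"
      using GP_ip[OF _ dnz[OF l], of "T *\<^sub>v R (Suc j)"] Tc by simp
    show ?thesis
    proof (cases "l < j")
      case True thus ?thesis using e1 e2 b'[of l] b'[of "Suc l"] IH2[of l] by simp
    next
      case False hence lj: "l = j" using l by simp
      have "ip (R (Suc j)) (T *\<^sub>v R (Suc j)) = Gm (Suc j)"
        unfolding gm_def using herm_ip[OF T, of "R (Suc j)" "R (Suc j)"] by simp
      hence "ip (G *\<^sub>v P j) (T *\<^sub>v R (Suc j)) = - Gm (Suc j) / dl j"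
        using e2 b'[of j] dl_real[of j] lj by simp
      thus ?thesis using e1 lj dlj \<pi>0 g0 unfolding \<pi>_def by (simp add: field_simps)
    qed
  qed
  have d: "ip (P (Suc j)) (R (Suc j)) = Gm (Suc j)"
  proof -
    have "ip (P (Suc j)) (R (Suc j)) = ip (T *\<^sub>v R (Suc j)) (R (Suc j)) + cnj (Gm (Suc j) / Gm j) * ip (P j) (R (Suc j))"
      unfolding pcg_S(4)[of j] using Tc by (simp add: ip_add_left[of _ n] ip_smult_left[of _ n])
    thus ?thesis using a[of j] gm_def[of "Suc j"] by simp
  qed
  show ?case using a c d by (auto simp: less_Suc_eq_le)
qed

lemma Vs_carrier: "v \<in> Vs k \<Longrightarrow> v \<in> carrier_vec n" unfolding Vs_def by auto

lemma Vs_zero: "0\<^sub>v n \<in> Vs k"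
  unfolding Vs_def by (rule CollectI, rule exI[of _ "\<lambda>_. 0"]) (rule eq_vecI, auto)

lemma Vs_add: "u \<in> Vs k \<Longrightarrow> w \<in> Vs k \<Longrightarrow> u + w \<in> Vs k"
proof -
  assume "u \<in> Vs k" "w \<in> Vs k"
  then obtain a b where u: "u = vs n (\<lambda>l. a l \<cdot>\<^sub>v P l) {..<k}" and w: "w = vs n (\<lambda>l. b l \<cdot>\<^sub>v P l) {..<k}"
    unfolding Vs_def by auto
  have "u + w = vs n (\<lambda>l. (a l + b l) \<cdot>\<^sub>v P l) {..<k}"
    unfolding u w by (rule eq_vecI) (auto simp: sum.distrib algebra_simps carrier_vecD[OF Pc])
  thus ?thesis unfolding Vs_def by auto
qed

lemma Vs_smult: "u \<in> Vs k \<Longrightarrow> c \<cdot>\<^sub>v u \<in> Vs k"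
proof -
  assume "u \<in> Vs k"
  then obtain a where u: "u = vs n (\<lambda>l. a l \<cdot>\<^sub>v P l) {..<k}" unfolding Vs_def by auto
  have "c \<cdot>\<^sub>v u = vs n (\<lambda>l. (c * a l) \<cdot>\<^sub>v P l) {..<k}"
    unfolding u by (rule eq_vecI) (auto simp: sum_distrib_left algebra_simps carrier_vecD[OF Pc])
  thus ?thesis unfolding Vs_def by auto
qed

lemma Vs_minus: "u \<in> Vs k \<Longrightarrow> w \<in> Vs k \<Longrightarrow> u - w \<in> Vs k"
proof -
  assume u: "u \<in> Vs k" and w: "w \<in> Vs k"
  have "u - w = u + (-1) \<cdot>\<^sub>v w" by (rule eq_vecI) (use Vs_carrier[OF u] Vs_carrier[OF w] in auto)
  thus ?thesis using Vs_add[OF u Vs_smult[OF w]] by simp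
qed

lemma Vs_P: "l < k \<Longrightarrow> P l \<in> Vs k"
proof -
  assume l: "l < k"
  have "P l = vs n (\<lambda>m. (if m = l then 1 else 0) \<cdot>\<^sub>v P m) {..<k}"
  proof (rule eq_vecI)
    fix i assume "i < dim_vec (vs n (\<lambda>m. (if m = l then 1 else 0) \<cdot>\<^sub>v P m) {..<k})"
    hence i: "i < n" by simp
    have "vs n (\<lambda>m. (if m = l then 1 else 0) \<cdot>\<^sub>v P m) {..<k} $ i = (\<Sum>m<k. (if m = l then 1 else 0) * P m $ i)"
      using i by simp
    also have "\<dots> = (\<Sum>m<k. if m = l then P l $ i else 0)" by (intro sum.cong refl) auto
    also have "\<dots> = P l $ i" using l by simp
    finally show "P l $ i = vs n (\<lambda>m. (if m = l then 1 else 0) \<cdot>\<^sub>v P m) {..<k} $ i" by simp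
  qed (simp add: carrier_vecD[OF Pc])
  thus ?thesis unfolding Vs_def by (auto intro!: exI[of _ "\<lambda>m. if m = l then 1 else 0"])
qed

lemma Vs_mono: "k \<le> k' \<Longrightarrow> u \<in> Vs k \<Longrightarrow> u \<in> Vs k'"
proof -
  assume kk: "k \<le> k'" and "u \<in> Vs k"
  then obtain a where u: "u = vs n (\<lambda>l. a l \<cdot>\<^sub>v P l) {..<k}" unfolding Vs_def by auto
  have "u = vs n (\<lambda>l. (if l < k then a l else 0) \<cdot>\<^sub>v P l) {..<k'}"
  proof (rule eq_vecI)
    fix i assume "i < dim_vec (vs n (\<lambda>l. (if l < k then a l else 0) \<cdot>\<^sub>v P l) {..<k'})"
    hence i: "i < n" by simp
    have "vs n (\<lambda>l. (if l < k then a l else 0) \<cdot>\<^sub>v P l) {..<k'} $ i = (\<Sum>l<k'. if l < k then a l * P l $ i else 0)"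
      using i by (auto intro!: sum.cong simp: carrier_vecD[OF Pc])
    also have "\<dots> = (\<Sum>l\<in>{..<k'} \<inter> {l. l < k}. a l * P l $ i)" by (simp add: sum.inter_restrict)
    also have "{..<k'} \<inter> {l. l < k} = {..<k}" using kk by auto
    finally show "u $ i = vs n (\<lambda>l. (if l < k then a l else 0) \<cdot>\<^sub>v P l) {..<k'} $ i"
      unfolding u using i by (auto simp: carrier_vecD[OF Pc])
  qed (simp add: u)
  thus ?thesis unfolding Vs_def by (auto intro!: exI[of _ "\<lambda>l. if l < k then a l else 0"])
qed

lemma Vs_vs: assumes K: "finite K" and f: "\<And>m. m \<in> K \<Longrightarrow> f m \<in> Vs k"
  shows "vs n f K \<in> Vs k"
  using K f
proof (induction K rule: finite_induct)
  case empty thus ?case using Vs_zero by (simp add: vs_empty)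
next
  case (insert x F)
  have "vs n f (insert x F) = f x + vs n f F"
    using insert Vs_carrier by (intro vs_insert) auto
  thus ?case using insert Vs_add by auto
qed

lemma Vs_mat: assumes B: "B \<in> carrier_mat n n" and u: "u = vs n (\<lambda>l. a l \<cdot>\<^sub>v P l) {..<k}"
  shows "B *\<^sub>v u = vs n (\<lambda>l. a l \<cdot>\<^sub>v (B *\<^sub>v P l)) {..<k}"
proof -
  have "B *\<^sub>v u = vs n (\<lambda>l. B *\<^sub>v (a l \<cdot>\<^sub>v P l)) {..<k}" unfolding u by (rule mat_vs[OF B]) auto
  also have "\<dots> = vs n (\<lambda>l. a l \<cdot>\<^sub>v (B *\<^sub>v P l)) {..<k}" using B by (intro vs_cong) (simp add: mult_mat_vec)
  finally show ?thesis .
qed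

lemma Vs_orth: assumes u: "u \<in> Vs k" and z: "z \<in> carrier_vec n" and o: "\<And>l. l < k \<Longrightarrow> ip (P l) z = 0"
  shows "ip u z = 0"
proof -
  obtain a where ue: "u = vs n (\<lambda>l. a l \<cdot>\<^sub>v P l) {..<k}" using u unfolding Vs_def by auto
  have "ip u z = (\<Sum>l<k. cnj (a l) * ip (P l) z)" unfolding ue by (rule ip_vs_smult_left[OF z]) auto
  also have "\<dots> = 0" using o by simp
  finally show ?thesis .
qed

lemma X_in: "X j - x0 \<in> Vs j"
proof (induction j)
  case 0
  have "X 0 - x0 = 0\<^sub>v n" using x0 by (simp add: pcg_0)
  thus ?case using Vs_zero by simp
next
  case (Suc j)
  have "X (Suc j) - x0 = (X j - x0) + dl j \<cdot>\<^sub>v P j"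
    by (rule eq_vecI) (use x0 in \<open>auto simp: pcg_S\<close>)
  thus ?case using Vs_add[OF Vs_mono[OF _ Suc.IH] Vs_smult[OF Vs_P]] by auto
qed

lemma TR_in: "T *\<^sub>v R m \<in> Vs (Suc m)"
proof (cases m)
  case 0 thus ?thesis using Vs_P[of 0 1] by (simp add: pcg_0)
next
  case (Suc m')
  have "T *\<^sub>v R m = P m - (Gm m / Gm m') \<cdot>\<^sub>v P m'"
    by (rule eq_vecI) (use Tc Suc in \<open>auto simp: pcg_S(4)[of m']\<close>)
  thus ?thesis using Vs_minus[OF Vs_P Vs_smult[OF Vs_P]] Suc by auto
qed

lemma TGP_in: assumes d: "dl l \<noteq> 0" shows "T *\<^sub>v (G *\<^sub>v P l) \<in> Vs (Suc (Suc l))"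
proof -
  have "G *\<^sub>v P l = (1 / dl l) \<cdot>\<^sub>v (R l - R (Suc l))"
    by (rule eq_vecI) (use Gc d in \<open>auto simp: pcg_S(2)[of l] field_simps\<close>)
  hence "T *\<^sub>v (G *\<^sub>v P l) = (1 / dl l) \<cdot>\<^sub>v (T *\<^sub>v R l - T *\<^sub>v R (Suc l))"
    using Tc by (simp add: mult_mat_vec[OF Tc] mult_minus_distrib_mat_vec[OF Tc])
  thus ?thesis using Vs_smult[OF Vs_minus[OF Vs_mono[OF _ TR_in] TR_in]] by auto
qed

lemma kv_in: assumes D: "\<And>l. l < i \<Longrightarrow> Gm l \<noteq> 0 \<and> ip (G *\<^sub>v P l) (P l) \<noteq> 0"
  shows "1 \<le> m \<Longrightarrow> m \<le> i \<Longrightarrow> kv G T x0 m \<in> Vs m"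
proof (induction m)
  case 0 thus ?case by simp
next
  case (Suc m)
  show ?case
  proof (cases m)
    case 0
    have "kv G T x0 (Suc m) = (-1) \<cdot>\<^sub>v P 0"
      by (rule eq_vecI) (use 0 Tc Gc x0 in \<open>auto simp: pcg_0 mv_eq sum_negf\<close>)
    thus ?thesis using Vs_smult[OF Vs_P[of 0 1]] 0 by simp
  next
    case (Suc m')
    hence "kv G T x0 m \<in> Vs m" using Suc.IH Suc.prems by simp
    then obtain a where ke: "kv G T x0 m = vs n (\<lambda>l. a l \<cdot>\<^sub>v P l) {..<m}" unfolding Vs_def by auto
    have "kv G T x0 (Suc m) = T *\<^sub>v vs n (\<lambda>l. a l \<cdot>\<^sub>v (G *\<^sub>v P l)) {..<m}"
      using Vs_mat[OF Gc ke] by simp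
    also have "\<dots> = vs n (\<lambda>l. T *\<^sub>v (a l \<cdot>\<^sub>v (G *\<^sub>v P l))) {..<m}" by (rule mat_vs[OF Tc]) (use Gc in auto)
    also have "\<dots> = vs n (\<lambda>l. a l \<cdot>\<^sub>v (T *\<^sub>v (G *\<^sub>v P l))) {..<m}"
      using Gc Tc by (intro vs_cong) (simp add: mult_mat_vec)
    also have "\<dots> \<in> Vs (Suc m)"
    proof (rule Vs_vs)
      fix l assume l: "l \<in> {..<m}"
      have "dl l \<noteq> 0" using D[of l] l Suc.prems unfolding dl_def by auto
      thus "a l \<cdot>\<^sub>v (T *\<^sub>v (G *\<^sub>v P l)) \<in> Vs (Suc m)" using l by (intro Vs_smult Vs_mono[OF _ TGP_in]) auto
    qed simp
    finally show ?thesis .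
  qed
qed

lemma cg_opt: assumes D: "\<And>l. l < i \<Longrightarrow> Gm l \<noteq> 0 \<and> ip (G *\<^sub>v P l) (P l) \<noteq> 0"
  and psd: "\<And>x. x \<in> carrier_vec n \<Longrightarrow> Re (ip x (G *\<^sub>v x)) \<ge> 0"
  and c0: "c 0 = 1"
  shows "Re (ip (X i) (G *\<^sub>v X i)) \<le> Re (ip (vs n (\<lambda>m. c m \<cdot>\<^sub>v kv G T x0 m) {..i}) (G *\<^sub>v vs n (\<lambda>m. c m \<cdot>\<^sub>v kv G T x0 m) {..i}))"
proof -
  define y where "y = vs n (\<lambda>m. c m \<cdot>\<^sub>v kv G T x0 m) {..i}"
  have kvc: "kv G T x0 m \<in> carrier_vec n" for m by (induction m) (use x0 Gc Tc in auto)
  have "{..i} = insert 0 {1..i}" by auto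
  hence "y = c 0 \<cdot>\<^sub>v kv G T x0 0 + vs n (\<lambda>m. c m \<cdot>\<^sub>v kv G T x0 m) {1..i}"
    unfolding y_def using kvc x0 vs_insert[of "{1..i}" 0 "\<lambda>m. c m \<cdot>\<^sub>v kv G T x0 m" n] by simp
  hence ye: "y = x0 + vs n (\<lambda>m. c m \<cdot>\<^sub>v kv G T x0 m) {1..i}" using c0 x0 by simp
  have "vs n (\<lambda>m. c m \<cdot>\<^sub>v kv G T x0 m) {1..i} \<in> Vs i"
    using kv_in[OF D] by (intro Vs_vs Vs_smult) (auto intro: Vs_mono)
  hence dV: "y - X i \<in> Vs i"
  proof -
    assume v: "vs n (\<lambda>m. c m \<cdot>\<^sub>v kv G T x0 m) {1..i} \<in> Vs i"
    have "y - X i = vs n (\<lambda>m. c m \<cdot>\<^sub>v kv G T x0 m) {1..i} - (X i - x0)"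
      unfolding ye by (rule eq_vecI) (use x0 in auto)
    thus ?thesis using Vs_minus[OF v X_in] by simp
  qed
  define d where "d = y - X i"
  have dc: "d \<in> carrier_vec n" using Vs_carrier[OF dV] unfolding d_def .
  have yd: "y = X i + d" unfolding d_def by (rule eq_vecI) (use ye x0 in auto)
  have o: "ip d (R i) = 0"
    using Vs_orth[OF dV[folded d_def], of "R i"] inv[OF D, of i] by auto
  have o1: "ip d (G *\<^sub>v X i) = 0"
  proof -
    have "G *\<^sub>v X i = (-1) \<cdot>\<^sub>v R i" unfolding RX[of i] by (rule eq_vecI) (use Gc in auto)
    thus ?thesis using o dc by (simp add: ip_smult_right[of _ n])
  qed
  have o2: "ip (X i) (G *\<^sub>v d) = 0"
    using herm_ip[OF G, of "X i" d] o1 ip_conj[of d n "G *\<^sub>v X i"] dc Gc by simp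
  have "ip y (G *\<^sub>v y) = ip (X i) (G *\<^sub>v X i) + ip (X i) (G *\<^sub>v d) + ip d (G *\<^sub>v X i) + ip d (G *\<^sub>v d)"
    unfolding yd using dc Gc
    by (simp add: mult_add_distrib_mat_vec[OF Gc] ip_add_left[of _ n] ip_add_right[of _ n])
  hence "Re (ip y (G *\<^sub>v y)) = Re (ip (X i) (G *\<^sub>v X i)) + Re (ip d (G *\<^sub>v d))" using o1 o2 by simp
  thus ?thesis using psd[OF dc] unfolding y_def by simp
qed

end
end


lemma cheb_cos2: "cheb k (cos t) = cos (real k * t) \<and> cheb (Suc k) (cos t) = cos (real (Suc k) * t)"
proof (induction k)
  case 0 thus ?case by simp
next
  case (Suc k)
  have "cos (real (Suc (Suc k)) * t) = 2 * cos t * cos (real (Suc k) * t) - cos (real k * t)"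
  proof -
    have a: "cos (real (Suc k) * t + t) = cos (real (Suc k) * t) * cos t - sin (real (Suc k) * t) * sin t"
      by (rule cos_add)
    have b: "cos (real (Suc k) * t - t) = cos (real (Suc k) * t) * cos t + sin (real (Suc k) * t) * sin t"
      by (rule cos_diff)
    have c: "real (Suc (Suc k)) * t = real (Suc k) * t + t" "real k * t = real (Suc k) * t - t"
      by (simp_all add: algebra_simps)
    show ?thesis unfolding c a b by simp
  qed
  thus ?case using Suc by simp
qed

lemma cheb_cos: "cheb k (cos t) = cos (real k * t)" using cheb_cos2 by blast

lemma cheb_bound: assumes "\<bar>x\<bar> \<le> 1" shows "\<bar>cheb k x\<bar> \<le> 1"
proof -
  have "x = cos (arccos x)" using assms by (simp add: cos_arccos)
  hence "cheb k x = cos (real k * arccos x)" using cheb_cos by metis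
  thus ?thesis by simp
qed

lemma cheb_ge1: assumes "x \<ge> 1" shows "cheb k x \<ge> 1 \<and> cheb (Suc k) x \<ge> cheb k x"
proof (induction k)
  case 0 thus ?case using assms by simp
next
  case (Suc k)
  have "1 * cheb (Suc k) x \<le> x * cheb (Suc k) x" by (rule mult_right_mono) (use assms Suc in auto)
  hence h: "2 * x * cheb (Suc k) x \<ge> 2 * cheb (Suc k) x" by simp
  have "cheb (Suc (Suc k)) x = 2 * x * cheb (Suc k) x - cheb k x" by simp
  thus ?case using Suc h by linarith
qed

fun chebp :: "nat \<Rightarrow> real poly" where
  "chebp 0 = 1"
| "chebp (Suc 0) = [:0, 1:]"
| "chebp (Suc (Suc k)) = [:0, 2:] * chebp (Suc k) - chebp k"

lemma chebp_poly: "poly (chebp k) x = cheb k x"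
  by (induction k rule: chebp.induct) auto

lemma chebp_degree: "degree (chebp k) \<le> k"
proof (induction k rule: chebp.induct)
  case 1 thus ?case by simp
next
  case 2 thus ?case by simp
next
  case (3 k)
  have "degree ([:0, 2:] * chebp (Suc k)) \<le> Suc (Suc k)"
    using degree_mult_le[of "[:0, 2:]" "chebp (Suc k)"] 3 by simp
  moreover have "degree (chebp k) \<le> Suc (Suc k)" using 3 by simp
  ultimately show ?case by (simp add: degree_diff_le)
qed

lemma poly_sum_le: fixes q :: "real poly" assumes "degree q \<le> i" shows "poly q x = (\<Sum>m\<le>i. coeff q m * x ^ m)"
proof -
  have "poly q x = (\<Sum>m\<le>degree q. coeff q m * x ^ m)" by (rule poly_altdef)
  also have "\<dots> = (\<Sum>m\<le>i. coeff q m * x ^ m)"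
    using assms by (intro sum.mono_neutral_left) (auto simp: coeff_eq_0)
  finally show ?thesis .
qed

lemma cheb_poly_exists: fixes a b :: real assumes a: "0 < a" and ab: "a < b"
  shows "\<exists>c::nat \<Rightarrow> real. c 0 = 1 \<and> (\<forall>t. a \<le> t \<longrightarrow> t \<le> b \<longrightarrow>
     \<bar>\<Sum>m\<le>i. c m * t ^ m\<bar> \<le> 1 / cheb i ((b + a) / (b - a)))"
proof -
  define \<phi> where "\<phi> = (b + a) / (b - a)"
  define C where "C = cheb i \<phi>"
  have \<phi>1: "\<phi> \<ge> 1" unfolding \<phi>_def using a ab by (simp add: field_simps)
  have C1: "C \<ge> 1" unfolding C_def using cheb_ge1[OF \<phi>1] by simp
  define q where "q = smult (1 / C) (pcompose (chebp i) [:\<phi>, - 2 / (b - a):])"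
  have pq: "poly q t = cheb i ((b + a - 2 * t) / (b - a)) / C" for t
  proof -
    have "poly q t = cheb i (\<phi> + t * (- 2 / (b - a))) / C" unfolding q_def by (simp add: poly_pcompose chebp_poly)
    also have "\<phi> + t * (- 2 / (b - a)) = (b + a - 2 * t) / (b - a)"
      unfolding \<phi>_def using ab by (simp add: diff_divide_distrib)
    finally show ?thesis .
  qed
  have dq: "degree q \<le> i"
  proof -
    have d1: "degree [:\<phi>, - 2 / (b - a):] \<le> 1" using degree_pCons_le[of \<phi> "[:- 2 / (b - a):]"] by simp
    have "degree (chebp i) * degree [:\<phi>, - 2 / (b - a):] \<le> i * 1"
      by (rule mult_le_mono[OF chebp_degree d1])
    hence "degree (pcompose (chebp i) [:\<phi>, - 2 / (b - a):]) \<le> i * 1"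
      using degree_pcompose_le[of "chebp i" "[:\<phi>, - 2 / (b - a):]"] by linarith
    thus ?thesis unfolding q_def by simp
  qed
  show ?thesis
  proof (intro exI[of _ "coeff q"] conjI allI impI)
    have "coeff q 0 = poly q 0" by (simp add: poly_0_coeff_0)
    also have "\<dots> = 1" using pq[of 0] C1 unfolding C_def \<phi>_def by simp
    finally show "coeff q 0 = 1" .
  next
    fix t assume t: "a \<le> t" "t \<le> b"
    have "\<bar>(b + a - 2 * t) / (b - a)\<bar> \<le> 1" using t ab by (simp add: abs_le_iff field_simps)
    hence "\<bar>cheb i ((b + a - 2 * t) / (b - a))\<bar> \<le> 1" by (rule cheb_bound)
    hence "\<bar>poly q t\<bar> \<le> 1 / C" using pq[of t] C1 by (simp add: abs_div divide_right_mono)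
    thus "\<bar>\<Sum>m\<le>i. coeff q m * t ^ m\<bar> \<le> 1 / cheb i ((b + a) / (b - a))"
      using poly_sum_le[OF dq] unfolding C_def \<phi>_def by metis
  qed
qed

lemma lin_poly_exists: fixes a :: real assumes a: "0 < a" and i: "1 \<le> i"
  shows "\<exists>c::nat \<Rightarrow> real. c 0 = 1 \<and> (\<Sum>m\<le>i. c m * a ^ m) = 0"
proof (intro exI[of _ "\<lambda>m. if m = 0 then 1 else if m = 1 then - 1 / a else 0"] conjI)
  have "(\<Sum>m\<le>i. (if m = 0 then 1 else if m = 1 then - 1 / a else 0) * a ^ m)
     = (\<Sum>m\<in>{0,1}. (if m = 0 then 1 else if m = 1 then - 1 / a else 0) * a ^ m)"
    using i by (intro sum.mono_neutral_right) auto
  also have "\<dots> = 0" using a by simp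
  finally show "(\<Sum>m\<le>i. (if m = 0 then 1 else if m = 1 then - 1 / a else 0) * a ^ m) = 0" .
qed simp


lemma comb_mv: fixes A M :: "complex mat" assumes A: "A \<in> carrier_mat n n" and M: "M \<in> carrier_mat n n" and x: "x \<in> carrier_vec n"
  shows "(A - s \<cdot>\<^sub>m M) *\<^sub>v x = A *\<^sub>v x - s \<cdot>\<^sub>v (M *\<^sub>v x)"
  using A M x by (simp add: minus_mult_distrib_mat_vec[of _ n n] smult_mat_mv)

lemma herm_comb: assumes A: "hermitian n A" and M: "hermitian n M"
  shows "hermitian n (A - of_real s \<cdot>\<^sub>m M)"
proof -
  have Ac: "A \<in> carrier_mat n n" and Mc: "M \<in> carrier_mat n n" using A M herm_carrier by auto
  show ?thesis
  proof (rule herm_by_ip)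
    show "A - of_real s \<cdot>\<^sub>m M \<in> carrier_mat n n" using Ac Mc by (simp add: minus_carrier_mat)
    fix x y :: "complex vec" assume x: "x \<in> carrier_vec n" and y: "y \<in> carrier_vec n"
    have "ip x ((A - of_real s \<cdot>\<^sub>m M) *\<^sub>v y) = ip x (A *\<^sub>v y) - of_real s * ip x (M *\<^sub>v y)"
      using Ac Mc x y by (simp add: comb_mv ip_minus_right[of _ n] ip_smult_right[of _ n])
    also have "\<dots> = ip (A *\<^sub>v x) y - of_real s * ip (M *\<^sub>v x) y" using herm_ip[OF A x y] herm_ip[OF M x y] by simp
    also have "\<dots> = ip ((A - of_real s \<cdot>\<^sub>m M) *\<^sub>v x) y"
      using Ac Mc x y by (simp add: comb_mv ip_minus_left[of _ n] ip_smult_left[of _ n])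
    finally show "ip x ((A - of_real s \<cdot>\<^sub>m M) *\<^sub>v y) = ip ((A - of_real s \<cdot>\<^sub>m M) *\<^sub>v x) y" .
  qed
qed

lemma sum_cmod_re: "Re (\<Sum>k<n. cnj (z k) * z k * of_real (r k)) = (\<Sum>k<n. r k * (cmod (z k))\<^sup>2)"
proof -
  have h: "cnj (z k) * z k = of_real ((cmod (z k))\<^sup>2)" for k by (simp only: cnj_mult_self cmod_power2)
  have h2: "cnj (z k) * z k * of_real (r k) = of_real (r k * (cmod (z k))\<^sup>2)" for k
    unfolding h of_real_mult by (rule mult.commute)
  have "(\<Sum>k<n. cnj (z k) * z k * of_real (r k)) = (\<Sum>k<n. of_real (r k * (cmod (z k))\<^sup>2))"
    by (intro sum.cong refl) (rule h2)
  also have "\<dots> = of_real (\<Sum>k<n. r k * (cmod (z k))\<^sup>2)" by (rule of_real_sum[symmetric])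
  finally have "(\<Sum>k<n. cnj (z k) * z k * of_real (r k)) = of_real (\<Sum>k<n. r k * (cmod (z k))\<^sup>2)" .
  thus ?thesis by simp
qed

lemma quad_peb: assumes p: "peb n A M v d" and A: "A \<in> carrier_mat n n" and M: "M \<in> carrier_mat n n"
  and x: "x \<in> carrier_vec n"
  shows "Re (ip x ((A - of_real s \<cdot>\<^sub>m M) *\<^sub>v x)) = (\<Sum>k<n. (d k - s) * (cmod (ip (v k) (M *\<^sub>v x)))\<^sup>2)"
proof -
  have "ip x ((A - of_real s \<cdot>\<^sub>m M) *\<^sub>v x) = (\<Sum>k<n. cnj (ip (v k) (M *\<^sub>v x)) * ip (v k) (M *\<^sub>v x) * of_real (d k - s))"
    using A M x by (intro peb_form[OF p M]) (auto simp: peb_Cv[OF p A M])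
  thus ?thesis using sum_cmod_re by simp
qed

lemma quad_peb_M: assumes p: "peb n A M v d" and M: "M \<in> carrier_mat n n"
  and x: "x \<in> carrier_vec n"
  shows "Re (ip x (M *\<^sub>v x)) = (\<Sum>k<n. (cmod (ip (v k) (M *\<^sub>v x)))\<^sup>2)"
proof -
  have "ip x (M *\<^sub>v x) = (\<Sum>k<n. cnj (ip (v k) (M *\<^sub>v x)) * ip (v k) (M *\<^sub>v x) * of_real 1)"
    using M x by (intro peb_form[OF p M]) (auto simp: peb_on[OF p])
  thus ?thesis using sum_cmod_re[of "\<lambda>k. ip (v k) (M *\<^sub>v x)" "\<lambda>_. 1" n] by simp
qed

lemma quad_peb_A: assumes p: "peb n A M v d" and A: "A \<in> carrier_mat n n" and M: "M \<in> carrier_mat n n"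
  and x: "x \<in> carrier_vec n"
  shows "Re (ip x (A *\<^sub>v x)) = (\<Sum>k<n. d k * (cmod (ip (v k) (M *\<^sub>v x)))\<^sup>2)"
proof -
  have "ip x (A *\<^sub>v x) = (\<Sum>k<n. cnj (ip (v k) (M *\<^sub>v x)) * ip (v k) (M *\<^sub>v x) * of_real (d k))"
    using A M x by (intro peb_form[OF p M]) (auto simp: peb_Cv0[OF p A M])
  thus ?thesis using sum_cmod_re by simp
qed

lemma peb_nonzero: assumes p: "peb n A M v d" and M: "M \<in> carrier_mat n n"
  and x: "x \<in> carrier_vec n" and nz: "x \<noteq> 0\<^sub>v n"
  shows "\<exists>k<n. ip (v k) (M *\<^sub>v x) \<noteq> 0"
proof (rule ccontr)
  assume "\<not> ?thesis"
  hence z: "\<And>k. k < n \<Longrightarrow> ip (v k) (M *\<^sub>v x) = 0" by auto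
  have "x = vs n (\<lambda>k. ip (v k) (M *\<^sub>v x) \<cdot>\<^sub>v v k) {..<n}" using peb_expand[OF p M x] .
  also have "\<dots> = vs n (\<lambda>k. 0\<^sub>v n) {..<n}" using z peb_carrier[OF p] by (intro vs_cong) (auto simp: smult_zero_vec0)
  also have "\<dots> = 0\<^sub>v n" by (rule eq_vecI) auto
  finally show False using nz by simp
qed

lemma peb_vnz: assumes p: "peb n A M v d" and M: "M \<in> carrier_mat n n" and k: "k < n"
  shows "v k \<noteq> 0\<^sub>v n"
proof
  assume "v k = 0\<^sub>v n"
  hence "ip (v k) (M *\<^sub>v v k) = 0" using M by (simp add: ip_zero_left[of _ n])
  thus False using peb_on[OF p k k] by simp
qed

lemma pd_injective: assumes M: "pos_def n M" and x: "x \<in> carrier_vec n" and Mx: "M *\<^sub>v x = 0\<^sub>v n"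
  shows "x = 0\<^sub>v n"
proof (rule ccontr)
  assume "x \<noteq> 0\<^sub>v n"
  hence "Re (ip x (M *\<^sub>v x)) > 0" using M x unfolding pos_def_def by auto
  thus False using Mx x by (simp add: ip_zero_right)
qed

lemma pd_det: assumes M: "pos_def n M" shows "det M \<noteq> 0"
  using det_0_iff_vec_prod_zero[OF pd_carrier[OF M]] pd_injective[OF M] by auto

lemma peb_eigval: assumes p: "peb n A M v d" and A: "A \<in> carrier_mat n n" and M: "pos_def n M"
  and eig: "\<forall>t::complex. det (A - t \<cdot>\<^sub>m M) = det M * (\<Prod>j=1..n. (complex_of_real (lam j) - t))"
  and k: "k < n"
  shows "\<exists>j\<in>{1..n}. lam j = d k"
proof -
  have Mc: "M \<in> carrier_mat n n" using pd_carrier[OF M] .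
  have "(A - of_real (d k) \<cdot>\<^sub>m M) *\<^sub>v v k = A *\<^sub>v v k - of_real (d k) \<cdot>\<^sub>v (M *\<^sub>v v k)"
    by (rule comb_mv[OF A Mc peb_carrier[OF p k]])
  also have "\<dots> = 0\<^sub>v n" unfolding peb_eig[OF p k] by (rule eq_vecI) (use Mc peb_carrier[OF p k] in auto)
  finally have "(A - of_real (d k) \<cdot>\<^sub>m M) *\<^sub>v v k = 0\<^sub>v n" .
  hence "det (A - of_real (d k) \<cdot>\<^sub>m M) = 0"
    using det_0_iff_vec_prod_zero[of "A - of_real (d k) \<cdot>\<^sub>m M" n] A Mc peb_carrier[OF p k] peb_vnz[OF p Mc k]
    by (auto simp: minus_carrier_mat)
  hence "(\<Prod>j=1..n. (complex_of_real (lam j) - of_real (d k))) = 0" using eig pd_det[OF M] by simp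
  then obtain j where "j \<in> {1..n}" "complex_of_real (lam j) - of_real (d k) = 0" by auto
  thus ?thesis by auto
qed


lemma mv_zero: fixes A :: "complex mat" assumes "A \<in> carrier_mat n n" shows "A *\<^sub>v 0\<^sub>v n = 0\<^sub>v n"
  by (rule eq_vecI) (use assms in \<open>auto simp: mv_eq\<close>)

lemma rayleigh_pencil: assumes p: "peb n B K u \<nu>" and B: "B \<in> carrier_mat n n" and K: "K \<in> carrier_mat n n"
  and x: "x \<in> carrier_vec n" and n: "0 < n"
  shows "Min (\<nu> ` {..<n}) * Re (ip x (K *\<^sub>v x)) \<le> Re (ip x (B *\<^sub>v x))"
    "Re (ip x (B *\<^sub>v x)) \<le> Max (\<nu> ` {..<n}) * Re (ip x (K *\<^sub>v x))"
proof -
  have qB: "Re (ip x (B *\<^sub>v x)) = (\<Sum>k<n. \<nu> k * (cmod (ip (u k) (K *\<^sub>v x)))\<^sup>2)" by (rule quad_peb_A[OF p B K x])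
  have qK: "Re (ip x (K *\<^sub>v x)) = (\<Sum>k<n. (cmod (ip (u k) (K *\<^sub>v x)))\<^sup>2)" by (rule quad_peb_M[OF p K x])
  have mn: "Min (\<nu> ` {..<n}) \<le> \<nu> k" "\<nu> k \<le> Max (\<nu> ` {..<n})" if "k < n" for k
    using that by (auto intro: Min_le Max_ge)
  show "Min (\<nu> ` {..<n}) * Re (ip x (K *\<^sub>v x)) \<le> Re (ip x (B *\<^sub>v x))"
    unfolding qB qK sum_distrib_left by (intro sum_mono mult_right_mono) (auto simp: mn)
  show "Re (ip x (B *\<^sub>v x)) \<le> Max (\<nu> ` {..<n}) * Re (ip x (K *\<^sub>v x))"
    unfolding qB qK sum_distrib_left by (intro sum_mono mult_right_mono) (auto simp: mn)
qed

lemma eigset: assumes p: "peb n B K u \<nu>" and Bh: "hermitian n B" and Kh: "hermitian n K"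
  and S: "S \<in> carrier_mat n n" and Si: "Si \<in> carrier_mat n n"
  and SSi: "S * Si = 1\<^sub>m n" and SiS: "Si * S = 1\<^sub>m n" and SiSi: "Si * Si = K"
  shows "Re ` {c. eigenvalue (S * B * S) c} = \<nu> ` {..<n}"
proof -
  have B: "B \<in> carrier_mat n n" and K: "K \<in> carrier_mat n n" using Bh Kh herm_carrier by auto
  have SBS: "S * B * S \<in> carrier_mat n n" using S B by simp
  have dr: "dim_row (S * B * S) = n" using S by simp
  have act: "(S * B * S) *\<^sub>v y = S *\<^sub>v (B *\<^sub>v (S *\<^sub>v y))" if "y \<in> carrier_vec n" for y
    using that S B by (simp add: assoc_mult_mat_vec[of _ n n _ n])
  have SiSv: "Si *\<^sub>v (S *\<^sub>v y) = y" if "y \<in> carrier_vec n" for y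
    using that S Si SiS by (metis assoc_mult_mat_vec one_mult_mat_vec)
  have SSiv: "S *\<^sub>v (Si *\<^sub>v y) = y" if "y \<in> carrier_vec n" for y
    using that S Si SSi by (metis assoc_mult_mat_vec one_mult_mat_vec)
  have Kv: "K *\<^sub>v y = Si *\<^sub>v (Si *\<^sub>v y)" if "y \<in> carrier_vec n" for y
    using that Si SiSi by (metis assoc_mult_mat_vec)
  show ?thesis
  proof (intro equalityI subsetI)
    fix r assume "r \<in> Re ` {c. eigenvalue (S * B * S) c}"
    then obtain c where ev: "eigenvalue (S * B * S) c" and r: "r = Re c" by auto
    obtain y where y: "y \<in> carrier_vec n" "y \<noteq> 0\<^sub>v n" and ey: "(S * B * S) *\<^sub>v y = c \<cdot>\<^sub>v y"
      using ev unfolding eigenvalue_def eigenvector_def dr by auto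
    define x where "x = S *\<^sub>v y"
    have xc: "x \<in> carrier_vec n" unfolding x_def using S y by simp
    have xnz: "x \<noteq> 0\<^sub>v n"
    proof
      assume "x = 0\<^sub>v n"
      hence "Si *\<^sub>v x = 0\<^sub>v n" using Si by (simp add: mv_zero)
      thus False using SiSv[OF y(1)] y(2) unfolding x_def by simp
    qed
    have Bx: "B *\<^sub>v x = c \<cdot>\<^sub>v (K *\<^sub>v x)"
    proof -
      have "B *\<^sub>v x = Si *\<^sub>v ((S * B * S) *\<^sub>v y)" unfolding act[OF y(1)] x_def using SiSv S B y by simp
      also have "\<dots> = c \<cdot>\<^sub>v (Si *\<^sub>v y)" using ey Si y by (simp add: mult_mat_vec)
      also have "Si *\<^sub>v y = K *\<^sub>v x" unfolding x_def Kv[OF xc[unfolded x_def]] using SiSv y by simp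
      finally show ?thesis .
    qed
    obtain j where j: "j < n" "ip (u j) (K *\<^sub>v x) \<noteq> 0" using peb_nonzero[OF p K xc xnz] by auto
    have uj: "u j \<in> carrier_vec n" using peb_carrier[OF p j(1)] .
    have "ip (u j) (B *\<^sub>v x) = of_real (\<nu> j) * ip (u j) (K *\<^sub>v x)"
    proof -
      have "ip (u j) (B *\<^sub>v x) = ip (B *\<^sub>v u j) x" using herm_ip[OF Bh uj xc] .
      also have "\<dots> = of_real (\<nu> j) * ip (K *\<^sub>v u j) x" using peb_eig[OF p j(1)] K uj xc by (simp add: ip_smult_left)
      also have "ip (K *\<^sub>v u j) x = ip (u j) (K *\<^sub>v x)" using herm_ip[OF Kh uj xc] by simp
      finally show ?thesis .
    qed
    moreover have "ip (u j) (B *\<^sub>v x) = c * ip (u j) (K *\<^sub>v x)" using Bx uj K xc by (simp add: ip_smult_right)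
    ultimately have "c = of_real (\<nu> j)" using j(2) by simp
    thus "r \<in> \<nu> ` {..<n}" using r j(1) by auto
  next
    fix r assume "r \<in> \<nu> ` {..<n}"
    then obtain k where k: "k < n" and r: "r = \<nu> k" by auto
    have uk: "u k \<in> carrier_vec n" using peb_carrier[OF p k] .
    define y where "y = Si *\<^sub>v u k"
    have yc: "y \<in> carrier_vec n" unfolding y_def using Si uk by simp
    have ynz: "y \<noteq> 0\<^sub>v n"
    proof
      assume "y = 0\<^sub>v n"
      hence "S *\<^sub>v y = 0\<^sub>v n" using S by (simp add: mv_zero)
      thus False using SSiv[OF uk] peb_vnz[OF p K k] unfolding y_def by simp
    qed
    have Sy: "S *\<^sub>v y = u k" unfolding y_def by (rule SSiv[OF uk])
    have "(S * B * S) *\<^sub>v y = S *\<^sub>v (B *\<^sub>v u k)" using act[OF yc] Sy by simp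
    also have "\<dots> = of_real (\<nu> k) \<cdot>\<^sub>v (S *\<^sub>v (K *\<^sub>v u k))" using peb_eig[OF p k] S K uk by (simp add: mult_mat_vec)
    also have "S *\<^sub>v (K *\<^sub>v u k) = y" unfolding Kv[OF uk] y_def using SSiv Si uk by simp
    finally have "(S * B * S) *\<^sub>v y = of_real (\<nu> k) \<cdot>\<^sub>v y" .
    hence "eigenvalue (S * B * S) (of_real (\<nu> k))"
      unfolding eigenvalue_def eigenvector_def dr using yc ynz by auto
    thus "r \<in> Re ` {c. eigenvalue (S * B * S) c}" using r by force
  qed
qed


lemma Al_w: assumes p: "peb n A M w dd" and A: "A \<in> carrier_mat n n" and M: "M \<in> carrier_mat n n" and l: "l < n"
  shows "(A - of_real s \<cdot>\<^sub>m M) *\<^sub>v w l = of_real (dd l - s) \<cdot>\<^sub>v (M *\<^sub>v w l)"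
proof -
  have wl: "w l \<in> carrier_vec n" using peb_carrier[OF p l] .
  have "(A - of_real s \<cdot>\<^sub>m M) *\<^sub>v w l = A *\<^sub>v w l - of_real s \<cdot>\<^sub>v (M *\<^sub>v w l)" by (rule comb_mv[OF A M wl])
  also have "\<dots> = of_real (dd l - s) \<cdot>\<^sub>v (M *\<^sub>v w l)" unfolding peb_eig[OF p l]
    by (rule eq_vecI) (use M wl in \<open>auto simp: algebra_simps\<close>)
  finally show ?thesis .
qed

lemma c2_ineq: fixes d l1 l2 s :: real assumes "s < l1" "l1 < l2" "l2 \<le> d"
  shows "(l2 - l1) / (l2 - s) * (d - s) \<le> d - l1"
proof -
  have e: "(d - l1) * (l2 - s) - (l2 - l1) * (d - s) = (l1 - s) * (d - l2)" by (simp add: algebra_simps)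
  have "(l1 - s) * (d - l2) \<ge> 0" using assms by simp
  hence "(l2 - l1) * (d - s) \<le> (d - l1) * (l2 - s)" using e by linarith
  thus ?thesis using assms by (simp add: pos_divide_le_eq mult.commute mult.left_commute)
qed

lemma c1_ineq: fixes d l1 lN s :: real assumes "s < l1" "l1 \<le> d" "d \<le> lN"
  shows "d - l1 \<le> (lN - l1) / (lN - s) * (d - s)"
proof -
  have e: "(lN - l1) * (d - s) - (d - l1) * (lN - s) = (l1 - s) * (lN - d)" by (simp add: algebra_simps)
  have "(l1 - s) * (lN - d) \<ge> 0" using assms by simp
  hence "(d - l1) * (lN - s) \<le> (lN - l1) * (d - s)" using e by linarith
  thus ?thesis using assms by (simp add: pos_le_divide_eq mult.commute mult.left_commute)
qed

lemma upper_bd: assumes p: "peb n A M w dd" and A: "A \<in> carrier_mat n n" and M: "M \<in> carrier_mat n n"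
  and dd: "\<And>l. l < n \<Longrightarrow> l1 \<le> dd l \<and> dd l \<le> lN" and s: "s < l1" and x: "x \<in> carrier_vec n"
  shows "Re (ip x ((A - of_real l1 \<cdot>\<^sub>m M) *\<^sub>v x)) \<le> (lN - l1) / (lN - s) * Re (ip x ((A - of_real s \<cdot>\<^sub>m M) *\<^sub>v x))"
  unfolding quad_peb[OF p A M x] sum_distrib_left
proof (intro sum_mono)
  fix l assume "l \<in> {..<n}"
  hence h: "dd l - l1 \<le> (lN - l1) / (lN - s) * (dd l - s)" using dd s by (intro c1_ineq) auto
  have "(dd l - l1) * (cmod (ip (w l) (M *\<^sub>v x)))\<^sup>2 \<le> ((lN - l1) / (lN - s) * (dd l - s)) * (cmod (ip (w l) (M *\<^sub>v x)))\<^sup>2"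
    by (rule mult_right_mono[OF h]) simp
  thus "(dd l - l1) * (cmod (ip (w l) (M *\<^sub>v x)))\<^sup>2 \<le> (lN - l1) / (lN - s) * ((dd l - s) * (cmod (ip (w l) (M *\<^sub>v x)))\<^sup>2)"
    by (simp only: mult.assoc)
qed

lemma lower_proj: assumes p: "peb n A M w dd" and Ah: "hermitian n A" and Mp: "pos_def n M"
  and Kh: "hermitian n K" and Kpsd: "\<And>e. e \<in> carrier_vec n \<Longrightarrow> Re (ip e (K *\<^sub>v e)) \<ge> 0"
  and ddl: "\<And>l. l < n \<Longrightarrow> dd l \<ge> l1 \<and> (dd l \<noteq> l1 \<longrightarrow> dd l \<ge> l2)"
  and sl: "s < l1" and l12: "l1 < l2"
  and x: "x \<in> carrier_vec n" and Alx: "(A - of_real l1 \<cdot>\<^sub>m M) *\<^sub>v x = of_real \<mu> \<cdot>\<^sub>v (K *\<^sub>v x)" and \<mu>: "\<mu> \<noteq> 0"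
  and ray: "\<And>y. y \<in> carrier_vec n \<Longrightarrow> \<nu>m * Re (ip y (K *\<^sub>v y)) \<le> Re (ip y ((A - of_real s \<cdot>\<^sub>m M) *\<^sub>v y))"
  and \<nu>m: "\<nu>m \<ge> 0"
  shows "(l2 - l1) / (l2 - s) * \<nu>m * Re (ip x (K *\<^sub>v x)) \<le> Re (ip x ((A - of_real l1 \<cdot>\<^sub>m M) *\<^sub>v x))"
proof -
  have Ac: "A \<in> carrier_mat n n" using herm_carrier[OF Ah] .
  have Mc: "M \<in> carrier_mat n n" using pd_carrier[OF Mp] .
  have Kc: "K \<in> carrier_mat n n" using herm_carrier[OF Kh] .
  define Al where "Al = A - of_real l1 \<cdot>\<^sub>m M"
  have Alc: "Al \<in> carrier_mat n n" unfolding Al_def using Ac Mc by (simp add: minus_carrier_mat)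
  have Alh: "hermitian n Al" unfolding Al_def by (rule herm_comb[OF Ah pd_herm[OF Mp]])
  have wc: "\<And>l. l \<in> {..<n} \<Longrightarrow> w l \<in> carrier_vec n" using peb_carrier[OF p] by auto
  define z where "z l = ip (w l) (M *\<^sub>v x)" for l
  define ec where "ec l = (if dd l = l1 then z l else 0)" for l
  define e where "e = vs n (\<lambda>l. ec l \<cdot>\<^sub>v w l) {..<n}"
  have ecar: "e \<in> carrier_vec n" unfolding e_def by simp
  define x' where "x' = x - e"
  have x'c: "x' \<in> carrier_vec n" unfolding x'_def using x ecar by simp
  have Ale: "Al *\<^sub>v e = 0\<^sub>v n"
  proof -
    have "Al *\<^sub>v e = vs n (\<lambda>l. Al *\<^sub>v (ec l \<cdot>\<^sub>v w l)) {..<n}" unfolding e_def by (rule mat_vs[OF Alc]) (use wc in auto)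
    also have "\<dots> = vs n (\<lambda>l. 0\<^sub>v n) {..<n}"
    proof (intro vs_cong)
      fix l assume l: "l \<in> {..<n}"
      have "Al *\<^sub>v (ec l \<cdot>\<^sub>v w l) = ec l \<cdot>\<^sub>v (of_real (dd l - l1) \<cdot>\<^sub>v (M *\<^sub>v w l))"
        using Alc wc[OF l] Al_w[OF p Ac Mc, of l l1] l unfolding Al_def by (simp add: mult_mat_vec)
      also have "\<dots> = 0\<^sub>v n" unfolding ec_def by (rule eq_vecI) (use Mc wc[OF l] in auto)
      finally show "Al *\<^sub>v (ec l \<cdot>\<^sub>v w l) = 0\<^sub>v n" .
    qed
    also have "\<dots> = 0\<^sub>v n" by (rule eq_vecI) auto
    finally show ?thesis .
  qed
  have eKx: "ip e (K *\<^sub>v x) = 0"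
  proof -
    have "of_real \<mu> * ip e (K *\<^sub>v x) = ip e (Al *\<^sub>v x)" using Alx ecar Kc x unfolding Al_def by (simp add: ip_smult_right)
    also have "\<dots> = ip (Al *\<^sub>v e) x" using herm_ip[OF Alh ecar x] .
    also have "\<dots> = 0" unfolding Ale using x by (simp add: ip_zero_left)
    finally show ?thesis using \<mu> by simp
  qed
  have xKe: "ip x (K *\<^sub>v e) = 0" using herm_ip[OF Kh x ecar] ip_conj[of e n "K *\<^sub>v x"] eKx ecar Kc x by simp
  have xe: "x = x' + e" unfolding x'_def by (rule eq_vecI) (use x ecar in auto)
  have Alx': "Al *\<^sub>v x = Al *\<^sub>v x'"
    using Ale Alc x'c ecar by (subst xe) (simp add: mult_add_distrib_mat_vec[OF Alc])
  have E1: "ip x (Al *\<^sub>v x) = ip x' (Al *\<^sub>v x')"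
  proof -
    have "ip x (Al *\<^sub>v x) = ip (x' + e) (Al *\<^sub>v x')" using Alx' xe by simp
    also have "\<dots> = ip x' (Al *\<^sub>v x') + ip e (Al *\<^sub>v x')" using x'c ecar Alc by (simp add: ip_add_left[of _ n])
    also have "ip e (Al *\<^sub>v x') = ip (Al *\<^sub>v e) x'" using herm_ip[OF Alh ecar x'c] .
    also have "\<dots> = 0" unfolding Ale using x'c by (simp add: ip_zero_left)
    finally show ?thesis by simp
  qed
  have coord: "ip (w l) (M *\<^sub>v x') = (if dd l = l1 then 0 else z l)" if l: "l < n" for l
  proof -
    have "ip (w l) (M *\<^sub>v x') = ip (w l) (M *\<^sub>v x) - ip (w l) (M *\<^sub>v e)"
      unfolding x'_def using Mc x ecar wc l by (simp add: mult_minus_distrib_mat_vec[OF Mc] ip_minus_right[of _ n])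
    also have "ip (w l) (M *\<^sub>v e) = ec l" unfolding e_def by (rule peb_coord[OF p Mc l])
    finally show ?thesis unfolding ec_def z_def by simp
  qed
  have E2: "(l2 - l1) / (l2 - s) * Re (ip x' ((A - of_real s \<cdot>\<^sub>m M) *\<^sub>v x')) \<le> Re (ip x' (Al *\<^sub>v x'))"
    unfolding Al_def quad_peb[OF p Ac Mc x'c] sum_distrib_left
  proof (intro sum_mono)
    fix l assume l: "l \<in> {..<n}"
    show "(l2 - l1) / (l2 - s) * ((dd l - s) * (cmod (ip (w l) (M *\<^sub>v x')))\<^sup>2) \<le> (dd l - l1) * (cmod (ip (w l) (M *\<^sub>v x')))\<^sup>2"
    proof (cases "dd l = l1")
      case True thus ?thesis using coord l by simp
    next
      case False
      hence "dd l \<ge> l2" using ddl l by auto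
      hence h: "(l2 - l1) / (l2 - s) * (dd l - s) \<le> dd l - l1" using sl l12 by (intro c2_ineq) auto
      have "((l2 - l1) / (l2 - s) * (dd l - s)) * (cmod (ip (w l) (M *\<^sub>v x')))\<^sup>2 \<le> (dd l - l1) * (cmod (ip (w l) (M *\<^sub>v x')))\<^sup>2"
        by (rule mult_right_mono[OF h]) simp
      thus ?thesis by (simp only: mult.assoc)
    qed
  qed
  have E3: "Re (ip x (K *\<^sub>v x)) \<le> Re (ip x' (K *\<^sub>v x'))"
  proof -
    have "ip x' (K *\<^sub>v x') = ip x (K *\<^sub>v x) - ip x (K *\<^sub>v e) - ip e (K *\<^sub>v x) + ip e (K *\<^sub>v e)"
      unfolding x'_def using x ecar Kc
      by (simp add: mult_minus_distrib_mat_vec[OF Kc] ip_minus_right[of _ n] ip_minus_left[of _ n])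
    thus ?thesis using eKx xKe Kpsd[OF ecar] by simp
  qed
  have c2: "(l2 - l1) / (l2 - s) \<ge> 0" using sl l12 by simp
  have "(l2 - l1) / (l2 - s) * \<nu>m * Re (ip x (K *\<^sub>v x)) \<le> (l2 - l1) / (l2 - s) * \<nu>m * Re (ip x' (K *\<^sub>v x'))"
    using E3 mult_nonneg_nonneg[OF c2 \<nu>m] by (intro mult_left_mono) auto
  also have "\<dots> \<le> (l2 - l1) / (l2 - s) * Re (ip x' ((A - of_real s \<cdot>\<^sub>m M) *\<^sub>v x'))"
    using mult_left_mono[OF ray[OF x'c] c2] by (simp only: mult.assoc)
  also have "\<dots> \<le> Re (ip x' (Al *\<^sub>v x'))" by (rule E2)
  also have "\<dots> = Re (ip x (Al *\<^sub>v x))" using E1 by simp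
  finally show ?thesis unfolding Al_def .
qed

lemma kv_expand: assumes p: "peb n G Ti vv \<mu>" and G: "G \<in> carrier_mat n n" and Ti: "Ti \<in> carrier_mat n n"
  and T: "T \<in> carrier_mat n n" and TTi: "T * Ti = 1\<^sub>m n" and x0: "x0 \<in> carrier_vec n"
  shows "kv G T x0 m = vs n (\<lambda>k. (ip (vv k) (Ti *\<^sub>v x0) * of_real (\<mu> k) ^ m) \<cdot>\<^sub>v vv k) {..<n}"
proof (induction m)
  case 0 show ?case using peb_expand[OF p Ti x0] by simp
next
  case (Suc m)
  have vc: "\<And>k. k \<in> {..<n} \<Longrightarrow> vv k \<in> carrier_vec n" using peb_carrier[OF p] by auto
  have TG: "T *\<^sub>v (G *\<^sub>v vv k) = of_real (\<mu> k) \<cdot>\<^sub>v vv k" if k: "k \<in> {..<n}" for k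
  proof -
    have "T *\<^sub>v (G *\<^sub>v vv k) = of_real (\<mu> k) \<cdot>\<^sub>v ((T * Ti) *\<^sub>v vv k)"
      using peb_eig[OF p] k T Ti vc[OF k] by (simp add: mult_mat_vec assoc_mult_mat_vec[of _ n n _ n])
    thus ?thesis using TTi vc[OF k] by simp
  qed
  have "kv G T x0 (Suc m) = T *\<^sub>v (G *\<^sub>v vs n (\<lambda>k. (ip (vv k) (Ti *\<^sub>v x0) * of_real (\<mu> k) ^ m) \<cdot>\<^sub>v vv k) {..<n})"
    using Suc by simp
  also have "G *\<^sub>v vs n (\<lambda>k. (ip (vv k) (Ti *\<^sub>v x0) * of_real (\<mu> k) ^ m) \<cdot>\<^sub>v vv k) {..<n}
     = vs n (\<lambda>k. G *\<^sub>v ((ip (vv k) (Ti *\<^sub>v x0) * of_real (\<mu> k) ^ m) \<cdot>\<^sub>v vv k)) {..<n}"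
    by (rule mat_vs[OF G]) (use vc in auto)
  also have "T *\<^sub>v \<dots> = vs n (\<lambda>k. T *\<^sub>v (G *\<^sub>v ((ip (vv k) (Ti *\<^sub>v x0) * of_real (\<mu> k) ^ m) \<cdot>\<^sub>v vv k))) {..<n}"
    by (rule mat_vs[OF T]) (use vc G in auto)
  also have "\<dots> = vs n (\<lambda>k. (ip (vv k) (Ti *\<^sub>v x0) * of_real (\<mu> k) ^ Suc m) \<cdot>\<^sub>v vv k) {..<n}"
  proof (intro vs_cong)
    fix k assume k: "k \<in> {..<n}"
    show "T *\<^sub>v (G *\<^sub>v ((ip (vv k) (Ti *\<^sub>v x0) * of_real (\<mu> k) ^ m) \<cdot>\<^sub>v vv k)) = (ip (vv k) (Ti *\<^sub>v x0) * of_real (\<mu> k) ^ Suc m) \<cdot>\<^sub>v vv k"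
      using TG[OF k] vc[OF k] G T by (simp add: mult_mat_vec smult_smult_assoc mult.commute mult.left_commute)
  qed
  finally show ?case .
qed

lemma y_expand: assumes vc: "\<And>k. k < n \<Longrightarrow> vv k \<in> carrier_vec n"
  and kv: "\<And>m. kvv m = vs n (\<lambda>k. (z k * of_real (\<mu> k) ^ m) \<cdot>\<^sub>v vv k) {..<n}"
  shows "vs n (\<lambda>m. of_real (c m) \<cdot>\<^sub>v kvv m) {..i} = vs n (\<lambda>k. (z k * of_real (\<Sum>m\<le>i. c m * \<mu> k ^ m)) \<cdot>\<^sub>v vv k) {..<n}"
proof (rule eq_vecI)
  fix j assume "j < dim_vec (vs n (\<lambda>k. (z k * of_real (\<Sum>m\<le>i. c m * \<mu> k ^ m)) \<cdot>\<^sub>v vv k) {..<n})"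
  hence j: "j < n" by simp
  have vd: "\<And>k. k < n \<Longrightarrow> dim_vec (vv k) = n" using vc by auto
  have "vs n (\<lambda>m. of_real (c m) \<cdot>\<^sub>v kvv m) {..i} $ j = (\<Sum>m\<le>i. of_real (c m) * (\<Sum>k<n. z k * of_real (\<mu> k) ^ m * vv k $ j))"
    using j by (simp add: kv vd)
  also have "\<dots> = (\<Sum>m\<le>i. \<Sum>k<n. of_real (c m) * (z k * of_real (\<mu> k) ^ m * vv k $ j))"
    by (simp add: sum_distrib_left)
  also have "\<dots> = (\<Sum>k<n. \<Sum>m\<le>i. of_real (c m) * (z k * of_real (\<mu> k) ^ m * vv k $ j))" by (rule sum.swap)
  also have "\<dots> = (\<Sum>k<n. (z k * of_real (\<Sum>m\<le>i. c m * \<mu> k ^ m)) * vv k $ j)"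
    by (intro sum.cong refl) (simp add: sum_distrib_left sum_distrib_right mult.commute mult.left_commute)
  also have "\<dots> = vs n (\<lambda>k. (z k * of_real (\<Sum>m\<le>i. c m * \<mu> k ^ m)) \<cdot>\<^sub>v vv k) {..<n} $ j"
    using j by (simp add: vd)
  finally show "vs n (\<lambda>m. of_real (c m) \<cdot>\<^sub>v kvv m) {..i} $ j = vs n (\<lambda>k. (z k * of_real (\<Sum>m\<le>i. c m * \<mu> k ^ m)) \<cdot>\<^sub>v vv k) {..<n} $ j" .
qed auto

lemma energy_bound: fixes \<mu> p r :: "nat \<Rightarrow> real"
  assumes \<mu>: "\<And>k. k < n \<Longrightarrow> \<mu> k \<ge> 0" and pb: "\<And>k. k < n \<Longrightarrow> \<mu> k \<noteq> 0 \<Longrightarrow> \<bar>p k\<bar> \<le> B"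
  and r: "\<And>k. r k \<ge> 0"
  shows "(\<Sum>k<n. \<mu> k * ((p k)\<^sup>2 * r k)) \<le> B\<^sup>2 * (\<Sum>k<n. \<mu> k * r k)"
  unfolding sum_distrib_left
proof (intro sum_mono)
  fix k assume k: "k \<in> {..<n}"
  show "\<mu> k * ((p k)\<^sup>2 * r k) \<le> B\<^sup>2 * (\<mu> k * r k)"
  proof (cases "\<mu> k = 0")
    case True thus ?thesis by simp
  next
    case False
    hence "\<bar>p k\<bar> \<le> B" using pb k by auto
    hence "(p k)\<^sup>2 \<le> B\<^sup>2" by (metis abs_le_square_iff abs_of_nonneg abs_ge_zero order_trans)
    hence "(p k)\<^sup>2 * (\<mu> k * r k) \<le> B\<^sup>2 * (\<mu> k * r k)" using \<mu> k r by (intro mult_right_mono) auto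
    thus ?thesis by (simp add: mult.commute mult.left_commute)
  qed
qed


lemma mfun_cong: "(\<And>k. k < n \<Longrightarrow> f k = g k) \<Longrightarrow> mfun n u f = mfun n u g"
  unfolding mfun_def by (intro eq_matI) (auto intro!: sum.cong)

lemma cg_energy: 
  fixes n :: nat and Al T Ti :: "complex mat" and x0 :: "complex vec" and vv :: "nat \<Rightarrow> complex vec" and \<mu> :: "nat \<Rightarrow> real"
  assumes Alh: "hermitian n Al" and Th: "hermitian n T" and Ti: "Ti \<in> carrier_mat n n" and TTi: "T * Ti = 1\<^sub>m n"
  and x0: "x0 \<in> carrier_vec n"
  and p: "peb n Al Ti vv \<mu>"
  and D: "\<And>l. l < i \<Longrightarrow> pcg_gamma Al T x0 l \<noteq> 0 \<and> ip (Al *\<^sub>v pcg_p Al T x0 l) (pcg_p Al T x0 l) \<noteq> 0"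
  and psd: "\<And>x. x \<in> carrier_vec n \<Longrightarrow> Re (ip x (Al *\<^sub>v x)) \<ge> 0"
  and \<mu>0: "\<And>k. k < n \<Longrightarrow> \<mu> k \<ge> 0"
  and c0: "c 0 = 1" and pb: "\<And>k. k < n \<Longrightarrow> \<mu> k \<noteq> 0 \<Longrightarrow> \<bar>\<Sum>m\<le>i. c m * \<mu> k ^ m\<bar> \<le> B"
  shows "Re (ip (pcg_x Al T x0 i) (Al *\<^sub>v pcg_x Al T x0 i)) \<le> B\<^sup>2 * Re (ip x0 (Al *\<^sub>v x0))"
proof -
  have Alc: "Al \<in> carrier_mat n n" using herm_carrier[OF Alh] .
  have Tc: "T \<in> carrier_mat n n" using herm_carrier[OF Th] .
  define z where "z k = ip (vv k) (Ti *\<^sub>v x0)" for k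
  define pk where "pk k = (\<Sum>m\<le>i. c m * \<mu> k ^ m)" for k
  define y where "y = vs n (\<lambda>m. of_real (c m) \<cdot>\<^sub>v kv Al T x0 m) {..i}"
  have opt: "Re (ip (pcg_x Al T x0 i) (Al *\<^sub>v pcg_x Al T x0 i)) \<le> Re (ip y (Al *\<^sub>v y))"
    unfolding y_def by (rule cg_opt[OF Alh Th x0 D psd]) (use c0 in auto)
  have kvE: "kv Al T x0 m = vs n (\<lambda>k. (z k * of_real (\<mu> k) ^ m) \<cdot>\<^sub>v vv k) {..<n}" for m
    unfolding z_def by (rule kv_expand[OF p Alc Ti Tc TTi x0])
  have yE: "y = vs n (\<lambda>k. (z k * of_real (pk k)) \<cdot>\<^sub>v vv k) {..<n}"
    unfolding y_def pk_def by (rule y_expand) (use peb_carrier[OF p] kvE in auto)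
  have yc: "y \<in> carrier_vec n" unfolding yE by simp
  have coord: "ip (vv k) (Ti *\<^sub>v y) = z k * of_real (pk k)" if "k < n" for k
    unfolding yE by (rule peb_coord[OF p Ti that])
  have Ey: "Re (ip y (Al *\<^sub>v y)) = (\<Sum>k<n. \<mu> k * ((pk k)\<^sup>2 * (cmod (z k))\<^sup>2))"
    unfolding quad_peb_A[OF p Alc Ti yc]
    by (intro sum.cong refl) (simp add: coord norm_mult power_mult_distrib)
  have E0: "Re (ip x0 (Al *\<^sub>v x0)) = (\<Sum>k<n. \<mu> k * (cmod (z k))\<^sup>2)"
    unfolding quad_peb_A[OF p Alc Ti x0] z_def ..
  have "(\<Sum>k<n. \<mu> k * ((pk k)\<^sup>2 * (cmod (z k))\<^sup>2)) \<le> B\<^sup>2 * (\<Sum>k<n. \<mu> k * (cmod (z k))\<^sup>2)"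
    by (rule energy_bound) (use \<mu>0 pb in \<open>auto simp: pk_def\<close>)
  thus ?thesis using opt Ey E0 by simp
qed


theorem theorem2p2:
  fixes n :: nat and A M T :: "complex mat" and lam :: "nat \<Rightarrow> real"
    and \<sigma> :: real and x0 :: "complex vec" and i :: nat
  assumes herA: "hermitian n A"
    and pdM: "pos_def n M"
    and eig: "\<forall>t::complex. det (A - t \<cdot>\<^sub>m M) = det M * (\<Prod>j=1..n. (complex_of_real (lam j) - t))"
    and two: "2 \<le> n"
    and gap: "lam 1 < lam 2"
    and sorted: "\<forall>j k. 1 \<le> j \<longrightarrow> j \<le> k \<longrightarrow> k \<le> n \<longrightarrow> lam j \<le> lam k"
    and sig: "\<sigma> < lam 1"
    and pdT: "pos_def n T"
    and x0: "x0 \<in> carrier_vec n"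
    and not_eigvec: "\<not> (x0 \<noteq> 0\<^sub>v n \<and> A *\<^sub>v x0 = complex_of_real (lam 1) \<cdot>\<^sub>v (M *\<^sub>v x0))"
    and not_Morth: "\<not> (\<forall>v \<in> carrier_vec n. A *\<^sub>v v = complex_of_real (lam 1) \<cdot>\<^sub>v (M *\<^sub>v v)
                         \<longrightarrow> ip v (M *\<^sub>v x0) = 0)"
    and defined: "\<forall>j<i. pcg_gamma (A - complex_of_real (lam 1) \<cdot>\<^sub>m M) T x0 j \<noteq> 0 \<and>
          ip ((A - complex_of_real (lam 1) \<cdot>\<^sub>m M) *\<^sub>v pcg_p (A - complex_of_real (lam 1) \<cdot>\<^sub>m M) T x0 j)
             (pcg_p (A - complex_of_real (lam 1) \<cdot>\<^sub>m M) T x0 j) \<noteq> 0"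
    and xi_nz: "pcg_x (A - complex_of_real (lam 1) \<cdot>\<^sub>m M) T x0 i \<noteq> 0\<^sub>v n"
  shows
    "let Al = A - complex_of_real (lam 1) \<cdot>\<^sub>m M;
         As = A - complex_of_real \<sigma> \<cdot>\<^sub>m M;
         S = msqrt n T;
         \<kappa> = cond2 (S * As * S);
         \<eta> = \<kappa> * ((lam n - lam 1) * (lam 2 - \<sigma>)) / ((lam 2 - lam 1) * (lam n - \<sigma>));
         \<phi> = (\<eta> + 1) / (\<eta> - 1);
         xi = pcg_x Al T x0 i
     in rq A M xi - lam 1 \<le>
          inverse ((cheb i \<phi>)\<^sup>2) * ((mnorm M x0)\<^sup>2 / (mnorm M xi)\<^sup>2) * (rq A M x0 - lam 1)"
proof -
  define l1 where "l1 = lam 1"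
  define l2 where "l2 = lam 2"
  define lN where "lN = lam n"
  define Al where "Al = A - complex_of_real l1 \<cdot>\<^sub>m M"
  define As where "As = A - complex_of_real \<sigma> \<cdot>\<^sub>m M"
  have n0: "0 < n" using two by simp
  have Ac: "A \<in> carrier_mat n n" using herm_carrier[OF herA] .
  have Mc: "M \<in> carrier_mat n n" using pd_carrier[OF pdM] .
  have Tc: "T \<in> carrier_mat n n" using pd_carrier[OF pdT] .
  have Mh: "hermitian n M" using pd_herm[OF pdM] .
  have Alh: "hermitian n Al" unfolding Al_def by (rule herm_comb[OF herA Mh])
  have Ash: "hermitian n As" unfolding As_def by (rule herm_comb[OF herA Mh])
  have Alc: "Al \<in> carrier_mat n n" using herm_carrier[OF Alh] .
  have Asc: "As \<in> carrier_mat n n" using herm_carrier[OF Ash] .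
  have l12: "l1 < l2" unfolding l1_def l2_def using gap .
  have l2N: "l2 \<le> lN" unfolding l2_def lN_def using sorted two by (meson one_le_numeral order_refl)
  have sl1: "\<sigma> < l1" unfolding l1_def using sig .
  obtain w dd where pw: "peb n A M w dd" using pencil[OF herA pdM] by blast
  have ddr: "l1 \<le> dd l \<and> dd l \<le> lN \<and> (dd l \<noteq> l1 \<longrightarrow> l2 \<le> dd l)" if l: "l < n" for l
  proof -
    obtain j where j: "j \<in> {1..n}" "lam j = dd l" using peb_eigval[OF pw Ac pdM eig l] by auto
    have srt: "lam p \<le> lam q" if "1 \<le> p" "p \<le> q" "q \<le> n" for p q using sorted that by blast
    have "l1 \<le> dd l" unfolding l1_def using srt[of 1 j] j by auto
    moreover have "dd l \<le> lN" unfolding lN_def using srt[of j n] j by auto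
    moreover have "l2 \<le> dd l" if "dd l \<noteq> l1"
    proof -
      have "j \<noteq> 1" using that j unfolding l1_def by auto
      hence "2 \<le> j" using j by auto
      thus ?thesis unfolding l2_def using srt[of 2 j] j by auto
    qed
    ultimately show ?thesis by auto
  qed
  have psd: "Re (ip x (Al *\<^sub>v x)) \<ge> 0" if x: "x \<in> carrier_vec n" for x
    unfolding Al_def quad_peb[OF pw Ac Mc x] using ddr by (intro sum_nonneg mult_nonneg_nonneg) auto
  have Aspd: "pos_def n As" unfolding pos_def_def
  proof (intro conjI Ash ballI impI)
    fix x :: "complex vec" assume x: "x \<in> carrier_vec n" and nz: "x \<noteq> 0\<^sub>v n"
    obtain k where k: "k < n" "ip (w k) (M *\<^sub>v x) \<noteq> 0" using peb_nonzero[OF pw Mc x nz] by auto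
    have "(\<Sum>l<n. (dd l - \<sigma>) * (cmod (ip (w l) (M *\<^sub>v x)))\<^sup>2) > 0"
    proof (rule sum_pos2[of "{..<n}" k])
      show "0 < (dd k - \<sigma>) * (cmod (ip (w k) (M *\<^sub>v x)))\<^sup>2" using ddr[OF k(1)] sl1 k(2) by simp
    next
      fix l assume "l \<in> {..<n}"
      hence "dd l - \<sigma> \<ge> 0" using ddr sl1 by force
      thus "0 \<le> (dd l - \<sigma>) * (cmod (ip (w l) (M *\<^sub>v x)))\<^sup>2" by simp
    qed (use k in auto)
    thus "Re (ip x (As *\<^sub>v x)) > 0" unfolding As_def quad_peb[OF pw Ac Mc x] .
  qed
  obtain uT tT where uT: "onb n uT" and eT: "\<And>k. k < n \<Longrightarrow> T *\<^sub>v uT k = of_real (tT k) \<cdot>\<^sub>v uT k"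
    using spectral[OF pd_herm[OF pdT]] by blast
  have tTp: "tT k > 0" if k: "k < n" for k by (rule pd_eig_pos[of n T uT k tT, OF pdT uT k eT[OF k]])
  define Ti where "Ti = mfun n uT (\<lambda>k. 1 / tT k)"
  define S0 where "S0 = mfun n uT (\<lambda>k. sqrt (tT k))"
  define Si where "Si = mfun n uT (\<lambda>k. 1 / sqrt (tT k))"
  have Sdef: "msqrt n T = S0" unfolding S0_def by (rule msqrt_eq[OF pdT uT eT])
  have TM: "T = mfun n uT tT" by (rule mat_eig_eq_mfun[OF Tc uT eT])
  have Tic: "Ti \<in> carrier_mat n n" and S0c: "S0 \<in> carrier_mat n n" and Sic: "Si \<in> carrier_mat n n"
    unfolding Ti_def S0_def Si_def by auto
  have TTi: "T * Ti = 1\<^sub>m n" unfolding TM Ti_def mfun_mult[OF uT]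
    by (rule mfun_one[OF uT]) (use tTp in \<open>auto simp: less_imp_neq[symmetric]\<close>)
  have SSi: "S0 * Si = 1\<^sub>m n" unfolding S0_def Si_def mfun_mult[OF uT]
    by (rule mfun_one[OF uT]) (use tTp in \<open>auto simp: less_imp_neq[symmetric]\<close>)
  have SiS: "Si * S0 = 1\<^sub>m n" unfolding S0_def Si_def mfun_mult[OF uT]
    by (rule mfun_one[OF uT]) (use tTp in \<open>auto simp: less_imp_neq[symmetric]\<close>)
  have SiSi: "Si * Si = Ti" unfolding Si_def Ti_def mfun_mult[OF uT]
    by (rule mfun_cong) (use tTp in \<open>auto simp: less_imp_le\<close>)
  have Tipd: "pos_def n Ti" unfolding Ti_def by (rule mfun_pd[OF uT]) (use tTp in auto)
  have Tih: "hermitian n Ti" using pd_herm[OF Tipd] .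
  have Tipsd: "Re (ip e (Ti *\<^sub>v e)) \<ge> 0" if e: "e \<in> carrier_vec n" for e
    using Tipd e Tic unfolding pos_def_def by (cases "e = 0\<^sub>v n") (auto simp: ip_zero_left[of _ n] mv_zero less_imp_le)
  obtain uu \<nu> where pu: "peb n As Ti uu \<nu>" using pencil[OF Ash Tipd] by blast
  define \<nu>min where "\<nu>min = Min (\<nu> ` {..<n})"
  define \<nu>max where "\<nu>max = Max (\<nu> ` {..<n})"
  have \<nu>pos: "\<nu> k > 0" if k: "k < n" for k
  proof -
    have uk: "uu k \<in> carrier_vec n" using peb_carrier[OF pu k] .
    have "ip (uu k) (As *\<^sub>v uu k) = of_real (\<nu> k)"
      using peb_eig[OF pu k] peb_on[OF pu k k] uk Tic by (simp add: ip_smult_right[of _ n])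
    moreover have "Re (ip (uu k) (As *\<^sub>v uu k)) > 0" using Aspd uk peb_vnz[OF pu Tic k] unfolding pos_def_def by auto
    ultimately show ?thesis by simp
  qed
  have \<nu>minp: "\<nu>min > 0" unfolding \<nu>min_def using \<nu>pos n0 by (subst Min_gr_iff) auto
  have \<nu>mm: "\<nu>min \<le> \<nu>max" unfolding \<nu>min_def \<nu>max_def using n0
  proof -
    have m: "\<nu> 0 \<in> \<nu> ` {..<n}" using n0 by auto
    have "Min (\<nu> ` {..<n}) \<le> \<nu> 0" by (rule Min_le) (use m in auto)
    also have "\<nu> 0 \<le> Max (\<nu> ` {..<n})" by (rule Max_ge) (use m in auto)
    finally show "Min (\<nu> ` {..<n}) \<le> Max (\<nu> ` {..<n})" .
  qed
  have rayL: "\<nu>min * Re (ip x (Ti *\<^sub>v x)) \<le> Re (ip x (As *\<^sub>v x))" if "x \<in> carrier_vec n" for x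
    unfolding \<nu>min_def by (rule rayleigh_pencil(1)[OF pu Asc Tic that n0])
  have rayU: "Re (ip x (As *\<^sub>v x)) \<le> \<nu>max * Re (ip x (Ti *\<^sub>v x))" if "x \<in> carrier_vec n" for x
    unfolding \<nu>max_def by (rule rayleigh_pencil(2)[OF pu Asc Tic that n0])
  have kappa: "cond2 (S0 * As * S0) = \<nu>max / \<nu>min"
    unfolding cond2_def eigset[OF pu Ash Tih S0c Sic SSi SiS SiSi] \<nu>max_def \<nu>min_def ..
  obtain vv \<mu> where pv: "peb n Al Ti vv \<mu>" using pencil[OF Alh Tipd] by blast
  define c1 where "c1 = (lN - l1) / (lN - \<sigma>)"
  define c2 where "c2 = (l2 - l1) / (l2 - \<sigma>)"
  define a where "a = c2 * \<nu>min"
  define b where "b = c1 * \<nu>max"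
  have \<mu>val: "Re (ip (vv k) (Al *\<^sub>v vv k)) = \<mu> k" and Tiv: "Re (ip (vv k) (Ti *\<^sub>v vv k)) = 1" if k: "k < n" for k
  proof -
    have vk: "vv k \<in> carrier_vec n" using peb_carrier[OF pv k] .
    show "Re (ip (vv k) (Al *\<^sub>v vv k)) = \<mu> k"
      using peb_eig[OF pv k] peb_on[OF pv k k] vk Tic by (simp add: ip_smult_right[of _ n])
    show "Re (ip (vv k) (Ti *\<^sub>v vv k)) = 1" using peb_on[OF pv k k] by simp
  qed
  have \<mu>0: "\<mu> k \<ge> 0" if k: "k < n" for k using psd[OF peb_carrier[OF pv k]] \<mu>val[OF k] by simp
  have \<mu>b: "\<mu> k \<le> b" if k: "k < n" for k
  proof -
    have vk: "vv k \<in> carrier_vec n" using peb_carrier[OF pv k] .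
    have "Re (ip (vv k) (Al *\<^sub>v vv k)) \<le> c1 * Re (ip (vv k) (As *\<^sub>v vv k))"
      unfolding Al_def As_def c1_def by (rule upper_bd[OF pw Ac Mc _ sl1 vk]) (use ddr in auto)
    also have "\<dots> \<le> c1 * (\<nu>max * Re (ip (vv k) (Ti *\<^sub>v vv k)))"
      using rayU[OF vk] sl1 l12 l2N unfolding c1_def by (intro mult_left_mono) auto
    finally show ?thesis using \<mu>val[OF k] Tiv[OF k] unfolding b_def by simp
  qed
  have \<mu>a: "a \<le> \<mu> k" if k: "k < n" and nz: "\<mu> k \<noteq> 0" for k
  proof -
    have vk: "vv k \<in> carrier_vec n" using peb_carrier[OF pv k] .
    have "c2 * \<nu>min * Re (ip (vv k) (Ti *\<^sub>v vv k)) \<le> Re (ip (vv k) (Al *\<^sub>v vv k))"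
      unfolding c2_def Al_def
    proof (rule lower_proj[OF pw herA pdM Tih Tipsd _ sl1 l12 vk _ nz _ less_imp_le[OF \<nu>minp]])
      show "\<And>l. l < n \<Longrightarrow> l1 \<le> dd l \<and> (dd l \<noteq> l1 \<longrightarrow> l2 \<le> dd l)" using ddr by auto
      show "(A - complex_of_real l1 \<cdot>\<^sub>m M) *\<^sub>v vv k = complex_of_real (\<mu> k) \<cdot>\<^sub>v (Ti *\<^sub>v vv k)"
        using peb_eig[OF pv k] unfolding Al_def .
      show "\<And>y. y \<in> carrier_vec n \<Longrightarrow> \<nu>min * Re (ip y (Ti *\<^sub>v y)) \<le> Re (ip y ((A - complex_of_real \<sigma> \<cdot>\<^sub>m M) *\<^sub>v y))"
        using rayL unfolding As_def .
    qed
    thus ?thesis using \<mu>val[OF k] Tiv[OF k] unfolding a_def by simp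
  qed
  have c2p: "c2 > 0" unfolding c2_def using sl1 l12 by simp
  have c12: "c2 \<le> c1"
  proof -
    have "l2 - l1 \<le> (lN - l1) / (lN - \<sigma>) * (l2 - \<sigma>)" using c1_ineq[of \<sigma> l1 l2 lN] sl1 l12 l2N by simp
    thus ?thesis unfolding c1_def c2_def using sl1 l12 by (simp add: pos_divide_le_eq)
  qed
  have ap: "a > 0" unfolding a_def using c2p \<nu>minp by simp
  have ab: "a \<le> b" unfolding a_def b_def using c12 \<nu>mm c2p \<nu>minp by (intro mult_mono) auto
  have eta: "\<nu>max / \<nu>min * ((lN - l1) * (l2 - \<sigma>)) / ((l2 - l1) * (lN - \<sigma>)) = b / a"
    unfolding a_def b_def c1_def c2_def using sl1 l12 l2N \<nu>minp by (simp add: field_simps)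
  define xi where "xi = pcg_x Al T x0 i"
  define \<phi> where "\<phi> = (b / a + 1) / (b / a - 1)"
  have D: "\<And>l. l < i \<Longrightarrow> pcg_gamma Al T x0 l \<noteq> 0 \<and> ip (Al *\<^sub>v pcg_p Al T x0 l) (pcg_p Al T x0 l) \<noteq> 0"
    using defined unfolding Al_def l1_def by auto
  have Th: "hermitian n T" using pd_herm[OF pdT] .
  have Ei: "Re (ip xi (Al *\<^sub>v xi)) \<le> inverse ((cheb i \<phi>)\<^sup>2) * Re (ip x0 (Al *\<^sub>v x0))"
  proof (cases "i = 0")
    case True thus ?thesis unfolding xi_def pcg_x_def by (simp add: Let_def)
  next
    case False
    show ?thesis
    proof (cases "a = b")
      case True
      obtain c where c0: "c 0 = 1" and ca: "(\<Sum>m\<le>i. c m * a ^ m) = 0" using lin_poly_exists[OF ap, of i] False by auto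
      have "Re (ip xi (Al *\<^sub>v xi)) \<le> 0\<^sup>2 * Re (ip x0 (Al *\<^sub>v x0))" unfolding xi_def
      proof (rule cg_energy[where i=i and c=c, OF Alh Th Tic TTi x0 pv D psd \<mu>0 c0])
        fix k assume k: "k < n" and nz: "\<mu> k \<noteq> 0"
        have "\<mu> k = a" using \<mu>a[OF k nz] \<mu>b[OF k] True by simp
        thus "\<bar>\<Sum>m\<le>i. c m * \<mu> k ^ m\<bar> \<le> 0" using ca by simp
      qed auto
      moreover have "0 \<le> inverse ((cheb i \<phi>)\<^sup>2) * Re (ip x0 (Al *\<^sub>v x0))" using psd[OF x0] by simp
      ultimately show ?thesis by simp
    next
      case False
      hence ab': "a < b" using ab by simp
      obtain c where c0: "c 0 = 1" and cb: "\<And>t. a \<le> t \<Longrightarrow> t \<le> b \<Longrightarrow> \<bar>\<Sum>m\<le>i. c m * t ^ m\<bar> \<le> 1 / cheb i ((b + a) / (b - a))"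
        using cheb_poly_exists[OF ap ab', of i] by auto
      have phi: "\<phi> = (b + a) / (b - a)" unfolding \<phi>_def using ap ab' by (simp add: field_simps)
      have "Re (ip xi (Al *\<^sub>v xi)) \<le> (1 / cheb i \<phi>)\<^sup>2 * Re (ip x0 (Al *\<^sub>v x0))" unfolding xi_def
      proof (rule cg_energy[where i=i and c=c, OF Alh Th Tic TTi x0 pv D psd \<mu>0 c0])
        fix k assume k: "k < n" and nz: "\<mu> k \<noteq> 0"
        show "\<bar>\<Sum>m\<le>i. c m * \<mu> k ^ m\<bar> \<le> 1 / cheb i \<phi>" unfolding phi using cb \<mu>a[OF k nz] \<mu>b[OF k] by auto
      qed auto
      thus ?thesis by (simp add: power_one_over inverse_eq_divide)
    qed
  qed
  have x0nz: "x0 \<noteq> 0\<^sub>v n"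
  proof
    assume "x0 = 0\<^sub>v n"
    hence "M *\<^sub>v x0 = 0\<^sub>v n" using Mc by (simp add: mv_zero)
    thus False using not_Morth by (auto simp: ip_zero_right)
  qed
  have xic: "xi \<in> carrier_vec n" unfolding xi_def using Xc[OF Alh Th x0] by simp
  have xinz: "xi \<noteq> 0\<^sub>v n" unfolding xi_def Al_def l1_def using xi_nz .
  have N0: "Re (ip x0 (M *\<^sub>v x0)) > 0" using pdM x0 x0nz unfolding pos_def_def by auto
  have Ni: "Re (ip xi (M *\<^sub>v xi)) > 0" using pdM xic xinz unfolding pos_def_def by auto
  have rqE: "rq A M x - l1 = Re (ip x (Al *\<^sub>v x)) / Re (ip x (M *\<^sub>v x))" if x: "x \<in> carrier_vec n" and N: "Re (ip x (M *\<^sub>v x)) > 0" for x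
  proof -
    have "Re (ip x (Al *\<^sub>v x)) = Re (ip x (A *\<^sub>v x)) - l1 * Re (ip x (M *\<^sub>v x))"
      unfolding Al_def using Ac Mc x by (simp add: comb_mv ip_minus_right[of _ n] ip_smult_right[of _ n])
    thus ?thesis unfolding rq_def using N by (simp add: field_simps)
  qed
  have mn: "(mnorm M x)\<^sup>2 = Re (ip x (M *\<^sub>v x))" if "Re (ip x (M *\<^sub>v x)) > 0" for x
    unfolding mnorm_def using that by simp
  define C where "C = inverse ((cheb i \<phi>)\<^sup>2)"
  have C0: "C \<ge> 0" unfolding C_def by simp
  have "rq A M xi - l1 = Re (ip xi (Al *\<^sub>v xi)) / Re (ip xi (M *\<^sub>v xi))" using rqE[OF xic Ni] .
  also have "\<dots> \<le> C * Re (ip x0 (Al *\<^sub>v x0)) / Re (ip xi (M *\<^sub>v xi))"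
    using Ei Ni unfolding C_def by (simp add: divide_right_mono)
  also have "\<dots> = C * (Re (ip x0 (M *\<^sub>v x0)) / Re (ip xi (M *\<^sub>v xi))) * (rq A M x0 - l1)"
    unfolding rqE[OF x0 N0] using N0 Ni by (simp add: field_simps)
  finally have fin: "rq A M xi - l1 \<le> C * ((mnorm M x0)\<^sup>2 / (mnorm M xi)\<^sup>2) * (rq A M x0 - l1)"
    using mn[OF N0] mn[OF Ni] by simp
  have Sk: "cond2 (msqrt n T * As * msqrt n T) = \<nu>max / \<nu>min" using kappa Sdef by simp
  show ?thesis
    unfolding Let_def Sk[unfolded As_def] eta[unfolded lN_def l1_def l2_def]
    using fin unfolding C_def \<phi>_def xi_def Al_def l1_def .
qed


end
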